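(* Let $S$ be a rooted plane tree with $m\ge 1$ vertices and degree distribution sequence $d_S=(l,u,d_2,\dots,d_{m-1})$. Let $A_S(z)=\sum_{n\ge 0} a_{\mathcal{B}_n}(S)\,z^n$, where $a_{\mathcal{B}_n}(S)$ is the total number of (plane) embeddings of $S$ into all trees of $\mathcal{B}_n$. Then $$A_S(z)=\left(\frac{1}{1-2zB(z)}\right)^{m+l-1} z^{l+u-1}\, B(z)^{l+u}\, 2^u \prod_{i=3}^{m-1}(\boldsymbol{C}_{i-1})^{d_i},$$ where $B(z)=\frac{1-\sqrt{1-4z^2}}{2z}=\sum_{k\ge0}\boldsymbol{C}_k z^{2k+1}$ is the generating function of plane binary trees (by number of nodes).
   Context: $\mathcal{B}_n$ is the set of plane (ordered) binary trees with $n$ nodes, where every node has either $0$ or $2$ children and the left-to-right order of children matters; edges are directed from parent to child. $\boldsymbol{C}_k=\frac{1}{k+1}\binom{2k}{k}$ is the $k$-th Catalan number. For a rooted tree $S$ with $m$ vertices, its degree distribution sequence is $(d_0,d_1,\dots,d_{m-1})$ where $d_i$ is the number of vertices of out-degree (number of children) $i$; $l=d_0$ is the number of leaves and $u=d_1$ the number of unary vertices. A rooted tree $T$ is viewed as a poset on its vertices in which $v\le w$ iff $w$ is an ancestor of $v$ or $w=v$ (the root is the unique maximal element). For incomparable vertices $x,y$ of a plane tree, $x$ is left of $y$ if, at their lowest common ancestor, the child whose subtree contains $x$ precedes the child whose subtree contains $y$. A (plane) embedding of a plane rooted tree $S$ into a plane rooted tree $T$ is a subset $E$ of vertices of $T$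 such that the induced subposet on $E$ is isomorphic to the poset of $S$ via an isomorphism that respects the left-to-right order of the children of each vertex of $S$. $a_T(S)$ denotes the number of embeddings of $S$ into $T$, and for a finite family $\mathcal{F}$, $a_{\mathcal{F}}(S)=\sum_{T\in\mathcal{F}}a_T(S)$. *)

theory Defs
  imports Complex_Main "HOL-Computational_Algebra.Formal_Power_Series"
begin

datatype ptree = Node (kids: "ptree list")

text \<open>Vertices are addressed by paths (lists of child indices) from the root.\<close>
fun subtree_at :: "ptree \<Rightarrow> nat list \<Rightarrow> ptree option" where
  "subtree_at t [] = Some t"
| "subtree_at (Node ts) (i # p) = (if i < length ts then subtree_at (ts ! i) p else None)"

definition verts :: "ptree \<Rightarrow> nat list set" where
  "verts t = {p. subtree_at t p \<noteq> None}"

definition outdeg :: "ptree \<Rightarrow> nat list \<Rightarrow> nat" where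
  "outdeg t p = length (kids (the (subtree_at t p)))"

definition nverts :: "ptree \<Rightarrow> nat" where
  "nverts t = card (verts t)"

definition degdist :: "ptree \<Rightarrow> nat \<Rightarrow> nat" where
  "degdist t i = card {p \<in> verts t. outdeg t p = i}"

definition binary_trees :: "nat \<Rightarrow> ptree set" where
  "binary_trees n = {T. (\<forall>p\<in>verts T. outdeg T p = 0 \<or> outdeg T p = 2) \<and> nverts T = n}"

text \<open>Poset order: v \<le> w iff w is an ancestor of v or w = v, i.e. w's address is a prefix of v's.\<close>
definition tle :: "nat list \<Rightarrow> nat list \<Rightarrow> bool" where
  "tle v w \<longleftrightarrow> (\<exists>r. v = w @ r)"

text \<open>x is left of y: at their lowest common ancestor, the child containing x
  precedes the child containing y (this forces x and y incomparable).\<close>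
definition left_of :: "nat list \<Rightarrow> nat list \<Rightarrow> bool" where
  "left_of x y \<longleftrightarrow> (\<exists>q i j r s. x = q @ i # r \<and> y = q @ j # s \<and> i < j)"

definition embeddings :: "ptree \<Rightarrow> ptree \<Rightarrow> nat list set set" where
  "embeddings S T = {E. E \<subseteq> verts T \<and>
     (\<exists>f. bij_betw f (verts S) E \<and>
          (\<forall>x\<in>verts S. \<forall>y\<in>verts S. tle x y \<longleftrightarrow> tle (f x) (f y)) \<and>
          (\<forall>s\<in>verts S. \<forall>i j. i < j \<and> j < outdeg S s \<longrightarrow>
              left_of (f (s @ [i])) (f (s @ [j]))))}"

definition emb_count :: "ptree \<Rightarrow> ptree \<Rightarrow> nat" where
  "emb_count T S = card (embeddings S T)"

definition emb_count_family :: "ptree set \<Rightarrow> ptree \<Rightarrow> nat" where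
  "emb_count_family F S = (\<Sum>T\<in>F. emb_count T S)"

definition catalan :: "nat \<Rightarrow> real" where
  "catalan k = real (2 * k choose k) / real (k + 1)"

definition Bfps :: "real fps" where
  "Bfps = Abs_fps (\<lambda>n. if odd n then catalan ((n - 1) div 2) else 0)"

definition A_fps :: "ptree \<Rightarrow> real fps" where
  "A_fps S = Abs_fps (\<lambda>n. real (emb_count_family (binary_trees n) S))"

end

theory Submission
  imports Defs
begin

unbundle fps_syntax

lemma subtree_at_Cons_Node: "subtree_at (Node ts) (i # p) = (if i < length ts then subtree_at (ts ! i) p else None)"
  by simp

lemma verts_Nil[simp]: "[] \<in> verts t"
  by (simp add: verts_def)

lemma Cons_in_verts_Node[simp]: "(i # p \<in> verts (Node ts)) \<longleftrightarrow> i < length ts \<and> p \<in> verts (ts ! i)"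
  by (simp add: verts_def)

lemma verts_Node: "verts (Node ts) = insert [] (\<Union>i<length ts. (Cons i) ` verts (ts!i))"
proof (intro set_eqI iffI)
  fix p assume "p \<in> verts (Node ts)" then show "p \<in> insert [] (\<Union>i<length ts. (Cons i) ` verts (ts!i))"
    by (cases p) auto
qed auto

lemma outdeg_Nil[simp]: "outdeg (Node ts) [] = length ts"
  by (simp add: outdeg_def)

lemma outdeg_Cons[simp]: "i < length ts \<Longrightarrow> outdeg (Node ts) (i # p) = outdeg (ts ! i) p"
  by (simp add: outdeg_def)

lemma subtree_at_snoc: "subtree_at t (s @ [j]) = (case subtree_at t s of None \<Rightarrow> None
   | Some u \<Rightarrow> if j < length (kids u) then Some (kids u ! j) else None)"
proof (induction s arbitrary: t)
  case Nil
  then show ?case by (cases t) auto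
next
  case (Cons a s)
  then show ?case by (cases t) auto
qed

lemma verts_snoc: "s @ [j] \<in> verts t \<longleftrightarrow> s \<in> verts t \<and> j < outdeg t s"
  by (auto simp: verts_def outdeg_def subtree_at_snoc split: option.splits if_splits)

lemma finite_verts[simp]: "finite (verts t)"
proof (induction t)
  case (Node ts)
  then show ?case by (subst verts_Node) auto
qed

lemma tle_refl[simp]: "tle x x" by (simp add: tle_def)
lemma tle_Nil[simp]: "tle x []" by (simp add: tle_def)
lemma tle_Nil2[simp]: "tle [] y \<longleftrightarrow> y = []" by (simp add: tle_def)
lemma tle_trans: "tle x y \<Longrightarrow> tle y z \<Longrightarrow> tle x z" by (auto simp: tle_def)
lemma tle_antisym: "tle x y \<Longrightarrow> tle y x \<Longrightarrow> x = y" by (auto simp: tle_def)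
lemma tle_Cons[simp]: "tle (a # x) (b # y) \<longleftrightarrow> a = b \<and> tle x y" by (auto simp: tle_def)
lemma tle_Cons_Nil[simp]: "tle (a # x) [] " by (simp add: tle_def)

lemma left_of_Cons[simp]: "left_of (a # x) (b # y) \<longleftrightarrow> a < b \<or> (a = b \<and> left_of x y)"
proof
  assume "left_of (a # x) (b # y)"
  then obtain q i j r s where h: "a # x = q @ i # r" "b # y = q @ j # s" "i < j" by (auto simp: left_of_def)
  show "a < b \<or> (a = b \<and> left_of x y)"
  proof (cases q)
    case Nil then show ?thesis using h by auto
  next
    case (Cons c q') then show ?thesis using h by (auto simp: left_of_def)
  qed
next
  assume "a < b \<or> (a = b \<and> left_of x y)"
  then show "left_of (a # x) (b # y)"
  proof
    assume "a < b" then show ?thesis unfolding left_of_def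
      by (rule_tac x="[]" in exI) auto
  next
    assume "a = b \<and> left_of x y"
    then obtain q i j r s where "x = q @ i # r" "y = q @ j # s" "i < j" "a = b" by (auto simp: left_of_def)
    then show ?thesis unfolding left_of_def by (rule_tac x="a # q" in exI) auto
  qed
qed

lemma left_of_Nil1[simp]: "\<not> left_of [] y" by (simp add: left_of_def)
lemma left_of_Nil2[simp]: "\<not> left_of x []" by (simp add: left_of_def)



definition fv :: "ptree list \<Rightarrow> nat list set" where
  "fv ss = verts (Node ss) - {[]}"

definition fok :: "ptree list \<Rightarrow> ptree \<Rightarrow> (nat list \<Rightarrow> nat list) \<Rightarrow> bool" where
  "fok ss T f \<longleftrightarrow> f ` fv ss \<subseteq> verts T \<and>
     (\<forall>x\<in>fv ss. \<forall>y\<in>fv ss. tle x y \<longleftrightarrow> tle (f x) (f y)) \<and>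
     (\<forall>s i j. s @ [j] \<in> fv ss \<longrightarrow> i < j \<longrightarrow> left_of (f (s @ [i])) (f (s @ [j])))"

definition FE :: "ptree list \<Rightarrow> ptree \<Rightarrow> nat list set set" where
  "FE ss T = {f ` fv ss | f. fok ss T f}"

lemma Cons_in_fv[simp]: "i # p \<in> fv ss \<longleftrightarrow> i < length ss \<and> p \<in> verts (ss ! i)"
  by (simp add: fv_def)

lemma Nil_notin_fv[simp]: "[] \<notin> fv ss" by (simp add: fv_def)

lemma finite_fv[simp]: "finite (fv ss)" by (simp add: fv_def)

lemma fv_single: "fv [S] = Cons 0 ` verts S"
proof (intro set_eqI iffI)
  fix x assume "x \<in> fv [S]" then show "x \<in> Cons 0 ` verts S" by (cases x) auto
qed auto

lemma fok_inj: assumes "fok ss T f" shows "inj_on f (fv ss)"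
proof (rule inj_onI)
  fix x y assume "x \<in> fv ss" "y \<in> fv ss" "f x = f y"
  with assms have "tle x y" "tle y x" unfolding fok_def by auto
  then show "x = y" by (rule tle_antisym)
qed

lemma emb_FE: "embeddings S T = FE [S] T"
proof (intro set_eqI iffI)
  fix E assume "E \<in> embeddings S T"
  then obtain f where E: "E \<subseteq> verts T" "bij_betw f (verts S) E"
     and tl: "\<forall>x\<in>verts S. \<forall>y\<in>verts S. tle x y \<longleftrightarrow> tle (f x) (f y)"
     and lo: "\<forall>s\<in>verts S. \<forall>i j. i < j \<and> j < outdeg S s \<longrightarrow> left_of (f (s @ [i])) (f (s @ [j]))"
    unfolding embeddings_def by blast
  define g where "g x = f (tl x)" for x
  have im: "g ` fv [S] = E" using E(2) unfolding fv_single g_def bij_betw_def by (auto simp: image_image)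
  have "fok [S] T g"
    unfolding fok_def
  proof (intro conjI ballI allI impI)
    show "g ` fv [S] \<subseteq> verts T" using im E(1) by simp
  next
    fix x y assume "x \<in> fv [S]" "y \<in> fv [S]"
    then obtain x' y' where "x = 0 # x'" "y = 0 # y'" "x' \<in> verts S" "y' \<in> verts S"
      unfolding fv_single by blast
    then show "tle x y = tle (g x) (g y)" using tl unfolding g_def by simp
  next
    fix s i j assume h: "s @ [j] \<in> fv [S]" "i < j"
    show "left_of (g (s @ [i])) (g (s @ [j]))"
    proof (cases s)
      case Nil then show ?thesis using h by auto
    next
      case (Cons a s')
      then have "a = 0" "s' @ [j] \<in> verts S" using h by auto
      then show ?thesis using lo h Cons by (auto simp: g_def verts_snoc)
    qed
  qed
  then show "E \<in> FE [S] T" unfolding FE_def using im by blast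
next
  fix E assume "E \<in> FE [S] T"
  then obtain g where g: "fok [S] T g" "E = g ` fv [S]" unfolding FE_def by blast
  define f where "f p = g (0 # p)" for p
  have "E = f ` verts S" using g(2) by (simp add: fv_single f_def image_image)
  moreover have "inj_on f (verts S)"
    using fok_inj[OF g(1)] unfolding f_def fv_single inj_on_def by auto
  ultimately have "bij_betw f (verts S) E" by (simp add: bij_betw_def)
  moreover have "E \<subseteq> verts T" using g unfolding fok_def by auto
  moreover have "\<forall>x\<in>verts S. \<forall>y\<in>verts S. tle x y \<longleftrightarrow> tle (f x) (f y)"
  proof (intro ballI)
    fix x y assume "x \<in> verts S" "y \<in> verts S"
    then have "0 # x \<in> fv [S]" "0 # y \<in> fv [S]" by auto
    then have "tle (0 # x) (0 # y) \<longleftrightarrow> tle (f x) (f y)" using g(1) unfolding fok_def f_def by blast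
    then show "tle x y \<longleftrightarrow> tle (f x) (f y)" by simp
  qed
  moreover have "\<forall>s\<in>verts S. \<forall>i j. i < j \<and> j < outdeg S s \<longrightarrow> left_of (f (s @ [i])) (f (s @ [j]))"
  proof (intro ballI allI impI)
    fix s i j assume "s \<in> verts S" "i < j \<and> j < outdeg S s"
    then have "(0 # s) @ [j] \<in> fv [S]" by (simp add: verts_snoc)
    then show "left_of (f (s @ [i])) (f (s @ [j]))" using g(1) \<open>i < j \<and> j < outdeg S s\<close>
      unfolding fok_def f_def by (metis append_Cons)
  qed
  ultimately show "E \<in> embeddings S T" unfolding embeddings_def by blast
qed



definition FEn :: "ptree list \<Rightarrow> ptree \<Rightarrow> nat list set set" where
  "FEn ss T = {E \<in> FE ss T. [] \<notin> E}"
definition FEr :: "ptree \<Rightarrow> ptree \<Rightarrow> nat list set set" where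
  "FEr S T = {E \<in> FE [S] T. [] \<in> E}"

lemma tle_single: "tle [a] x \<Longrightarrow> x \<noteq> [] \<Longrightarrow> x = [a]"
  by (cases x) (auto simp: tle_def)

lemma FE_Nil_in: "length ss \<noteq> 1 \<Longrightarrow> E \<in> FE ss T \<Longrightarrow> [] \<notin> E"
proof
  assume l: "length ss \<noteq> 1" and "E \<in> FE ss T" and e: "[] \<in> E"
  then obtain f where f: "fok ss T f" "E = f ` fv ss" unfolding FE_def by blast
  then obtain x where x: "x \<in> fv ss" "f x = []" using e by auto
  have up: "tle y x" if "y \<in> fv ss" for y
    using f(1) x that unfolding fok_def by auto
  obtain i p where xi: "x = i # p" using x(1) by (cases x) auto
  then have "length ss \<ge> 2" using l x(1) by auto
  then have "[0] \<in> fv ss" "[1] \<in> fv ss" by auto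
  then have "x = [0]" "x = [1]" using up tle_single xi by blast+
  then show False by simp
qed

lemma FE_Nil_list: "FE [] T = {{}}"
proof -
  have "fv [] = {}" by (auto simp: fv_def verts_Node)
  moreover have "fok [] T id" unfolding fok_def by (simp add: \<open>fv [] = {}\<close>)
  ultimately show ?thesis unfolding FE_def by auto
qed

lemma FEn_leaf: "FEn ss (Node []) = (if ss = [] then {{}} else {})"
proof (cases "ss = []")
  case True then show ?thesis unfolding FEn_def by (auto simp: FE_Nil_list)
next
  case False
  have "E \<notin> FEn ss (Node [])" for E
  proof
    assume "E \<in> FEn ss (Node [])"
    then obtain f where f: "fok ss (Node []) f" "E = f ` fv ss" "[] \<notin> E" unfolding FEn_def FE_def by blast
    obtain S ss' where "ss = S # ss'" using False by (cases ss) auto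
    then have "[0] \<in> fv ss" by simp
    then have "f [0] \<in> verts (Node [])" using f(1) unfolding fok_def by auto
    then have "f [0] = []" by (auto simp: verts_Node)
    then show False using f(2,3) \<open>[0] \<in> fv ss\<close> by (metis image_eqI)
  qed
  then show ?thesis using False by auto
qed

lemma FEr_Node: "FEr (Node ss) T = insert [] ` FEn ss T"
proof (intro set_eqI iffI)
  fix E assume "E \<in> FEr (Node ss) T"
  then obtain f where f: "fok [Node ss] T f" "E = f ` fv [Node ss]" "[] \<in> E" unfolding FEr_def FE_def by blast
  then obtain x where x: "x \<in> fv [Node ss]" "f x = []" by auto
  have up: "tle y x" if "y \<in> fv [Node ss]" for y
    using f(1) x that unfolding fok_def by auto
  have "[0] \<in> fv [Node ss]" by simp
  then have x0: "x = [0]" using up[of "[0]"] tle_single x(1) by (metis Nil_notin_fv)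
  define g where "g p = f (0 # p)" for p
  have fvN: "p \<in> fv ss \<longleftrightarrow> 0 # p \<in> fv [Node ss] \<and> p \<noteq> []" for p
    by (auto simp: fv_def)
  have gok: "fok ss T g" unfolding fok_def
  proof (intro conjI ballI allI impI)
    show "g ` fv ss \<subseteq> verts T" using f(1) fvN unfolding fok_def g_def by auto
  next
    fix a b assume "a \<in> fv ss" "b \<in> fv ss"
    then have "0 # a \<in> fv [Node ss]" "0 # b \<in> fv [Node ss]" using fvN by auto
    then have "tle (0 # a) (0 # b) \<longleftrightarrow> tle (g a) (g b)" using f(1) unfolding fok_def g_def by blast
    then show "tle a b \<longleftrightarrow> tle (g a) (g b)" by simp
  next
    fix s i j assume "s @ [j] \<in> fv ss" "i < j"
    then have "(0 # s) @ [j] \<in> fv [Node ss]" using fvN by (metis append_Cons)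
    then show "left_of (g (s @ [i])) (g (s @ [j]))" using f(1) \<open>i < j\<close> unfolding fok_def g_def
      by (metis append_Cons)
  qed
  have inj: "inj_on f (fv [Node ss])" using fok_inj f(1) by blast
  have "g ` fv ss = E - {[]}"
  proof (intro set_eqI iffI)
    fix e assume "e \<in> g ` fv ss"
    then obtain p where p: "p \<in> fv ss" "e = f (0 # p)" unfolding g_def by auto
    then have "0 # p \<in> fv [Node ss]" "0 # p \<noteq> [0]" using fvN by auto
    then have "e \<noteq> []" using inj x x0 p(2) by (metis inj_on_eq_iff)
    then show "e \<in> E - {[]}" using p f(2) \<open>0 # p \<in> fv [Node ss]\<close> by auto
  next
    fix e assume "e \<in> E - {[]}"
    then obtain y where y: "y \<in> fv [Node ss]" "e = f y" "e \<noteq> []" using f(2) by auto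
    then obtain p where "y = 0 # p" by (cases y) auto
    then have "p \<noteq> []" using y x x0 by auto
    then have "p \<in> fv ss" using fvN y \<open>y = 0 # p\<close> by auto
    then show "e \<in> g ` fv ss" using y \<open>y = 0 # p\<close> g_def by auto
  qed
  then have "E = insert [] (g ` fv ss)" "[] \<notin> g ` fv ss" using f(3) by auto
  then show "E \<in> insert [] ` FEn ss T" using gok unfolding FEn_def FE_def by blast
next
  fix E assume "E \<in> insert [] ` FEn ss T"
  then obtain g where g: "fok ss T g" "E = insert [] (g ` fv ss)" "[] \<notin> g ` fv ss"
    unfolding FEn_def FE_def by blast
  define f where "f x = (if tl x = [] then [] else g (tl x))" for x
  have fvN: "p \<in> fv ss \<longleftrightarrow> 0 # p \<in> fv [Node ss] \<and> p \<noteq> []" for p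
    by (auto simp: fv_def)
  have fvN2: "x \<in> fv [Node ss] \<longleftrightarrow> (\<exists>p. x = 0 # p \<and> (p = [] \<or> p \<in> fv ss))" for x
    by (cases x) (auto simp: fv_def)
  have fok: "fok [Node ss] T f" unfolding fok_def
  proof (intro conjI ballI allI impI)
    show "f ` fv [Node ss] \<subseteq> verts T" using g(1) fvN2 unfolding fok_def f_def by fastforce
  next
    fix x y assume "x \<in> fv [Node ss]" "y \<in> fv [Node ss]"
    then obtain p q where pq: "x = 0 # p" "y = 0 # q" "p = [] \<or> p \<in> fv ss" "q = [] \<or> q \<in> fv ss"
      using fvN2 by metis
    show "tle x y \<longleftrightarrow> tle (f x) (f y)"
    proof (cases "q = []")
      case True then show ?thesis using pq by (simp add: f_def)
    next
      case False
      then have q: "q \<in> fv ss" using pq by auto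
      then have "g q \<noteq> []" using g(3) by (metis image_eqI)
      show ?thesis
      proof (cases "p = []")
        case True then show ?thesis using pq q False \<open>g q \<noteq> []\<close> by (simp add: f_def)
      next
        case False
        then show ?thesis using pq q g(1) \<open>q \<noteq> []\<close> \<open>g q \<noteq> []\<close> unfolding fok_def f_def by auto
      qed
    qed
  next
    fix s i j assume h: "s @ [j] \<in> fv [Node ss]" "i < j"
    show "left_of (f (s @ [i])) (f (s @ [j]))"
    proof (cases s)
      case Nil then show ?thesis using h by auto
    next
      case (Cons a s')
      then have "a = 0" "s' @ [j] \<in> fv ss" using h fvN2 by auto
      then show ?thesis using g(1) h Cons unfolding fok_def f_def by auto
    qed
  qed
  have "f ` fv [Node ss] = E"
  proof (intro set_eqI iffI)
    fix e assume "e \<in> f ` fv [Node ss]"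
    then show "e \<in> E" using fvN2 g(2) by (auto simp: f_def)
  next
    fix e assume "e \<in> E"
    then have "e = [] \<or> e \<in> g ` fv ss" using g(2) by auto
    then show "e \<in> f ` fv [Node ss]"
    proof
      assume "e = []" then have "e = f [0]" by (simp add: f_def)
      then show ?thesis by (simp add: fv_def)
    next
      assume "e \<in> g ` fv ss"
      then obtain p where "p \<in> fv ss" "e = g p" by auto
      then have "e = f (0 # p)" "0 # p \<in> fv [Node ss]" using fvN by (auto simp: f_def)
      then show ?thesis by blast
    qed
  qed
  then show "E \<in> FEr (Node ss) T" unfolding FEr_def FE_def using fok g(2) by blast
qed



lemma verts2: "c # w \<in> verts (Node [L, R]) \<longleftrightarrow> (c = 0 \<and> w \<in> verts L) \<or> (c = 1 \<and> w \<in> verts R)"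
  by (auto simp: less_2_cases_iff nth_Cons split: nat.splits)

lemma fv_take: "x \<in> fv (take j ss) \<longleftrightarrow> x \<in> fv ss \<and> hd x < j"
  by (cases x) auto

lemma fv_drop: "i # p \<in> fv (drop j ss) \<longleftrightarrow> (i + j) # p \<in> fv ss"
  by (cases "j \<le> length ss") (auto simp: add.commute)

lemma fv_snoc_less: "s @ [b] \<in> fv ss \<Longrightarrow> a < b \<Longrightarrow> s @ [a] \<in> fv ss"
  unfolding fv_def by (auto simp: verts_snoc)

definition join :: "nat list set \<Rightarrow> nat list set \<Rightarrow> nat list set" where
  "join E1 E2 = Cons 0 ` E1 \<union> Cons 1 ` E2"

lemma split_sub:
  assumes f: "fok ss (Node [L, R]) f" and nz: "[] \<notin> f ` fv ss"
  shows "\<exists>j \<le> length ss. \<exists>f1 f2. fok (take j ss) L f1 \<and> fok (drop j ss) R f2 \<and>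
           f ` fv ss = join (f1 ` fv (take j ss)) (f2 ` fv (drop j ss))"
proof -
  let ?k = "length ss"
  have nz': "x \<in> fv ss \<Longrightarrow> f x \<noteq> []" for x using nz by (metis image_eqI)
  have inV: "x \<in> fv ss \<Longrightarrow> f x \<in> verts (Node [L, R])" for x using f unfolding fok_def by blast
  have tlf: "x \<in> fv ss \<Longrightarrow> y \<in> fv ss \<Longrightarrow> tle x y \<longleftrightarrow> tle (f x) (f y)" for x y
    using f unfolding fok_def by blast
  have lof: "s @ [b] \<in> fv ss \<Longrightarrow> a < b \<Longrightarrow> left_of (f (s @ [a])) (f (s @ [b]))" for s a b
    using f unfolding fok_def by blast
  define side where "side i = hd (f [i])" for i
  have side_hd: "hd (f (i # p)) = side i" if "i # p \<in> fv ss" for i p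
  proof -
    have "[i] \<in> fv ss" using that by auto
    moreover have "tle (i # p) [i]" by simp
    ultimately have "tle (f (i # p)) (f [i])" using tlf that by blast
    then obtain r where "f (i # p) = f [i] @ r" by (auto simp: tle_def)
    moreover have "f [i] \<noteq> []" using nz' \<open>[i] \<in> fv ss\<close> by blast
    ultimately show ?thesis by (simp add: side_def)
  qed
  have side01: "side i = 0 \<or> side i = 1" if "i < ?k" for i
  proof -
    have "[i] \<in> fv ss" using that by auto
    then have "f [i] \<noteq> []" "f [i] \<in> verts (Node [L, R])" using nz' inV by auto
    then obtain c w where "f [i] = c # w" "c # w \<in> verts (Node [L, R])" by (auto simp: neq_Nil_conv)
    then show ?thesis by (auto simp: side_def verts2)
  qed
  have mono: "side i \<le> side i'" if "i < i'" "i' < ?k" for i i'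
  proof -
    have "[] @ [i'] \<in> fv ss" using that by auto
    then have "left_of (f [i]) (f [i'])" using lof that(1) by fastforce
    moreover have "[i] \<in> fv ss" "[i'] \<in> fv ss" using that by auto
    then have "f [i] \<noteq> []" "f [i'] \<noteq> []" using nz' by auto
    then obtain a w b w' where "f [i] = a # w" "f [i'] = b # w'" by (auto simp: neq_Nil_conv)
    ultimately show ?thesis by (auto simp: side_def)
  qed
  define j where "j = (if \<exists>i<?k. side i = 1 then LEAST i. i < ?k \<and> side i = 1 else ?k)"
  have jF: "j = ?k" if "\<not> (\<exists>i<?k. side i = 1)" unfolding j_def using that by (rule if_not_P)
  have jT: "j < ?k \<and> side j = 1 \<and> (\<forall>i. i < ?k \<and> side i = 1 \<longrightarrow> j \<le> i)" if "\<exists>i<?k. side i = 1"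
  proof -
    have e: "j = (LEAST i. i < ?k \<and> side i = 1)" unfolding j_def using that by (rule if_P)
    have "j < ?k \<and> side j = 1" unfolding e using that by (intro LeastI_ex[of "\<lambda>i. i < ?k \<and> side i = 1"]) simp
    moreover have "\<forall>i. i < ?k \<and> side i = 1 \<longrightarrow> j \<le> i" unfolding e by (simp add: Least_le)
    ultimately show ?thesis by blast
  qed
  have jk: "j \<le> ?k" using jF jT by fastforce
  have j0: "side i = 0" if "i < j" for i
  proof (cases "\<exists>i<?k. side i = 1")
    case True
    then have jk': "j < ?k" using jT by blast
    have "\<not> (i < ?k \<and> side i = 1)"
    proof
      assume "i < ?k \<and> side i = 1"
      then have "j \<le> i" using jT[OF True] by blast
      then show False using that by simp
    qed
    then show ?thesis using side01[of i] jk' that by auto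
  next
    case False then show ?thesis using side01 that jF by fastforce
  qed
  have j1: "side i = 1" if "j \<le> i" "i < ?k" for i
  proof (cases "\<exists>i<?k. side i = 1")
    case True
    then have sj: "side j = 1" "j < ?k" using jT by auto
    show ?thesis
    proof (cases "i = j")
      case True then show ?thesis using sj by simp
    next
      case False then have "side j \<le> side i" using mono that by simp
      then show ?thesis using sj side01 that by fastforce
    qed
  next
    case False then show ?thesis using that jF by simp
  qed
  have Lside: "f x = 0 # tl (f x) \<and> tl (f x) \<in> verts L" if xf: "x \<in> fv ss" "hd x < j" for x
  proof -
    have "x \<noteq> []" using that by auto
    then obtain i p where x: "x = i # p" by (auto simp: neq_Nil_conv)
    then have "hd (f x) = 0" using side_hd j0 that by auto
    moreover obtain c w where "f x = c # w" using nz'[OF xf(1)] by (auto simp: neq_Nil_conv)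
    ultimately show ?thesis using inV[OF xf(1)] by (auto simp: verts2)
  qed
  have Rside: "f x = 1 # tl (f x) \<and> tl (f x) \<in> verts R" if xf: "x \<in> fv ss" "\<not> hd x < j" for x
  proof -
    have "x \<noteq> []" using that by auto
    then obtain i p where x: "x = i # p" by (auto simp: neq_Nil_conv)
    then have "hd (f x) = 1" using side_hd j1 that by auto
    moreover obtain c w where "f x = c # w" using nz'[OF xf(1)] by (auto simp: neq_Nil_conv)
    ultimately show ?thesis using inV[OF xf(1)] by (auto simp: verts2)
  qed
  define f1 where "f1 x = tl (f x)" for x
  define sh where "sh x = (hd x + j) # tl x" for x :: "nat list"
  define f2 where "f2 x = tl (f (sh x))" for x
  have sh_fv: "x \<in> fv (drop j ss) \<Longrightarrow> sh x \<in> fv ss \<and> \<not> hd (sh x) < j" for x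
    by (cases x) (auto simp: sh_def fv_drop add.commute)
  have fok1: "fok (take j ss) L f1" unfolding fok_def
  proof (intro conjI ballI allI impI)
    show "f1 ` fv (take j ss) \<subseteq> verts L" using Lside by (auto simp: fv_take f1_def)
  next
    fix x y assume "x \<in> fv (take j ss)" "y \<in> fv (take j ss)"
    then have h: "x \<in> fv ss" "hd x < j" "y \<in> fv ss" "hd y < j" by (auto simp: fv_take)
    have "tle x y \<longleftrightarrow> tle (f x) (f y)" using tlf h by blast
    also have "\<dots> \<longleftrightarrow> tle (0 # f1 x) (0 # f1 y)" using Lside h unfolding f1_def by metis
    finally show "tle x y \<longleftrightarrow> tle (f1 x) (f1 y)" by simp
  next
    fix s a b assume h: "s @ [b] \<in> fv (take j ss)" "a < b"
    then have h2: "s @ [b] \<in> fv ss" "hd (s @ [b]) < j" by (auto simp: fv_take)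
    then have h3: "s @ [a] \<in> fv ss" using fv_snoc_less h by blast
    have "hd (s @ [a]) < j" using h2 h by (cases s) auto
    then have "left_of (0 # f1 (s @ [a])) (0 # f1 (s @ [b]))"
      using lof[OF h2(1) h(2)] Lside h2 h3 unfolding f1_def by metis
    then show "left_of (f1 (s @ [a])) (f1 (s @ [b]))" by simp
  qed
  have fok2: "fok (drop j ss) R f2" unfolding fok_def
  proof (intro conjI ballI allI impI)
    show "f2 ` fv (drop j ss) \<subseteq> verts R" using Rside sh_fv by (auto simp: f2_def)
  next
    fix x y assume "x \<in> fv (drop j ss)" "y \<in> fv (drop j ss)"
    then have h: "sh x \<in> fv ss" "\<not> hd (sh x) < j" "sh y \<in> fv ss" "\<not> hd (sh y) < j" using sh_fv by auto
    have "tle x y \<longleftrightarrow> tle (sh x) (sh y)" using \<open>x \<in> fv (drop j ss)\<close> \<open>y \<in> fv (drop j ss)\<close>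
      by (cases x; cases y) (auto simp: sh_def)
    also have "\<dots> \<longleftrightarrow> tle (f (sh x)) (f (sh y))" using tlf h by blast
    also have "\<dots> \<longleftrightarrow> tle (1 # f2 x) (1 # f2 y)" using Rside h unfolding f2_def by metis
    finally show "tle x y \<longleftrightarrow> tle (f2 x) (f2 y)" by simp
  next
    fix s a b assume h: "s @ [b] \<in> fv (drop j ss)" "a < b"
    have sh_snoc: "sh (s @ [c]) = (if s = [] then [] @ [c + j] else sh s @ [c])" for c
      by (cases s) (auto simp: sh_def)
    have h2: "sh (s @ [b]) \<in> fv ss" "\<not> hd (sh (s @ [b])) < j" using sh_fv h by auto
    have h3: "sh (s @ [a]) \<in> fv ss" "\<not> hd (sh (s @ [a])) < j"
    proof -
      show "sh (s @ [a]) \<in> fv ss"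
      proof (cases "s = []")
        case True then show ?thesis using h2 h(2) fv_snoc_less[of "[]" "b + j" ss "a + j"] sh_snoc by simp
      next
        case False then show ?thesis using h2 h(2) fv_snoc_less[of "sh s" b ss a] sh_snoc by simp
      qed
      show "\<not> hd (sh (s @ [a])) < j" by (cases s) (auto simp: sh_def)
    qed
    have "left_of (f (sh (s @ [a]))) (f (sh (s @ [b])))"
    proof (cases "s = []")
      case True then show ?thesis using lof[of "[]" "b + j" "a + j"] h2 h(2) sh_snoc by simp
    next
      case False then show ?thesis using lof[of "sh s" b a] h2 h(2) sh_snoc by simp
    qed
    then have "left_of (1 # f2 (s @ [a])) (1 # f2 (s @ [b]))"
      using Rside h2 h3 unfolding f2_def by metis
    then show "left_of (f2 (s @ [a])) (f2 (s @ [b]))" by simp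
  qed
  have img: "f ` fv ss = join (f1 ` fv (take j ss)) (f2 ` fv (drop j ss))"
  proof (intro set_eqI iffI)
    fix e assume "e \<in> f ` fv ss"
    then obtain x where x: "x \<in> fv ss" "e = f x" by auto
    show "e \<in> join (f1 ` fv (take j ss)) (f2 ` fv (drop j ss))"
    proof (cases "hd x < j")
      case True
      then have "x \<in> fv (take j ss)" using x by (simp add: fv_take)
      then show ?thesis using Lside[OF x(1) True] x(2) unfolding join_def f1_def by auto
    next
      case False
      have "x \<noteq> []" using x by auto
    then obtain i p where xi: "x = i # p" by (auto simp: neq_Nil_conv)
      have "(i - j) # p \<in> fv (drop j ss)" using x xi False by (simp add: fv_drop less_diff_conv2)
      moreover have "sh ((i - j) # p) = x" using False xi by (simp add: sh_def)
      ultimately show ?thesis using Rside[OF x(1) False] x(2) unfolding join_def f2_def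
        by (metis UnI2 image_eqI)
    qed
  next
    fix e assume "e \<in> join (f1 ` fv (take j ss)) (f2 ` fv (drop j ss))"
    then consider (l) x where "x \<in> fv (take j ss)" "e = 0 # f1 x"
      | (r) y where "y \<in> fv (drop j ss)" "e = 1 # f2 y" unfolding join_def by auto
    then show "e \<in> f ` fv ss"
    proof cases
      case l then show ?thesis using Lside unfolding f1_def by (metis fv_take image_eqI)
    next
      case r then show ?thesis using Rside sh_fv unfolding f2_def by (metis image_eqI)
    qed
  qed
  show ?thesis using jk fok1 fok2 img by blast
qed

lemma split_sup:
  assumes jk: "j \<le> length ss" and f1: "fok (take j ss) L f1" and f2: "fok (drop j ss) R f2"
  shows "\<exists>f. fok ss (Node [L, R]) f \<and> [] \<notin> f ` fv ss \<and>
           f ` fv ss = join (f1 ` fv (take j ss)) (f2 ` fv (drop j ss))"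
proof -
  define us where "us x = (hd x - j) # tl x" for x :: "nat list"
  define f where "f x = (if hd x < j then 0 # f1 x else 1 # f2 (us x))" for x
  have us_fv: "x \<in> fv ss \<Longrightarrow> \<not> hd x < j \<Longrightarrow> us x \<in> fv (drop j ss)" for x
    by (cases x) (auto simp: us_def fv_drop)
  have i1: "f1 ` fv (take j ss) \<subseteq> verts L" using f1 unfolding fok_def by blast
  have i2: "f2 ` fv (drop j ss) \<subseteq> verts R" using f2 unfolding fok_def by blast
  have t1: "x \<in> fv (take j ss) \<Longrightarrow> y \<in> fv (take j ss) \<Longrightarrow> tle x y \<longleftrightarrow> tle (f1 x) (f1 y)" for x y
    using f1 unfolding fok_def by blast
  have t2: "x \<in> fv (drop j ss) \<Longrightarrow> y \<in> fv (drop j ss) \<Longrightarrow> tle x y \<longleftrightarrow> tle (f2 x) (f2 y)" for x y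
    using f2 unfolding fok_def by blast
  have l1: "s @ [b] \<in> fv (take j ss) \<Longrightarrow> a < b \<Longrightarrow> left_of (f1 (s @ [a])) (f1 (s @ [b]))" for s a b
    using f1 unfolding fok_def by blast
  have l2: "s @ [b] \<in> fv (drop j ss) \<Longrightarrow> a < b \<Longrightarrow> left_of (f2 (s @ [a])) (f2 (s @ [b]))" for s a b
    using f2 unfolding fok_def by blast
  have fok: "fok ss (Node [L, R]) f" unfolding fok_def
  proof (intro conjI ballI allI impI)
    show "f ` fv ss \<subseteq> verts (Node [L, R])"
    proof
      fix e assume "e \<in> f ` fv ss"
      then obtain x where x: "x \<in> fv ss" "e = f x" by auto
      show "e \<in> verts (Node [L, R])"
      proof (cases "hd x < j")
        case True then show ?thesis using x i1 by (auto simp: f_def verts2 fv_take)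
      next
        case False then show ?thesis using x i2 us_fv by (auto simp: f_def verts2)
      qed
    qed
  next
    fix x y assume xy: "x \<in> fv ss" "y \<in> fv ss"
    have "x \<noteq> []" using xy by auto
    then obtain i p where xi: "x = i # p" by (auto simp: neq_Nil_conv)
    obtain i' p' where yi: "y = i' # p'" using xy by (cases y) auto
    show "tle x y \<longleftrightarrow> tle (f x) (f y)"
    proof (cases "i < j")
      case True note ij = True
      show ?thesis
      proof (cases "i' < j")
        case True then show ?thesis using ij t1[of x y] xy xi yi by (simp add: f_def fv_take)
      next
        case False then show ?thesis using ij xi yi by (auto simp: f_def)
      qed
    next
      case False note ij = False
      show ?thesis
      proof (cases "i' < j")
        case True then show ?thesis using ij xi yi by (auto simp: f_def)
      next
        case False
        have "tle x y \<longleftrightarrow> tle (us x) (us y)" using ij False xi yi by (auto simp: us_def)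
        then show ?thesis using ij False t2[of "us x" "us y"] xy us_fv xi yi by (simp add: f_def)
      qed
    qed
  next
    fix s a b assume h: "s @ [b] \<in> fv ss" "a < b"
    have h3: "s @ [a] \<in> fv ss" using fv_snoc_less h by blast
    show "left_of (f (s @ [a])) (f (s @ [b]))"
    proof (cases s)
      case Nil
      show ?thesis
      proof (cases "b < j")
        case True
        then have "[] @ [b] \<in> fv (take j ss)" using h Nil by (simp add: fv_take)
        then show ?thesis using l1[of "[]" b a] h True Nil by (simp add: f_def)
      next
        case False note bj = False
        show ?thesis
        proof (cases "a < j")
          case True then show ?thesis using bj Nil by (simp add: f_def)
        next
          case False
          have "[] @ [b - j] \<in> fv (drop j ss)" using us_fv[of "[b]"] h Nil bj by (simp add: us_def)
          then show ?thesis using l2[of "[]" "b - j" "a - j"] h False bj Nil by (simp add: f_def us_def)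
        qed
      qed
    next
      case (Cons i s')
      show ?thesis
      proof (cases "i < j")
        case True
        then have "(i # s') @ [b] \<in> fv (take j ss)" using h Cons by (simp add: fv_take)
        then show ?thesis using l1[of "i # s'" b a] h True Cons by (simp add: f_def)
      next
        case False
        have "us (s @ [b]) \<in> fv (drop j ss)" using us_fv h False Cons by simp
        then have "((i - j) # s') @ [b] \<in> fv (drop j ss)" using Cons by (simp add: us_def)
        then show ?thesis using l2[of "(i - j) # s'" b a] h False Cons by (simp add: f_def us_def)
      qed
    qed
  qed
  have nz: "[] \<notin> f ` fv ss" by (auto simp: f_def)
  have img: "f ` fv ss = join (f1 ` fv (take j ss)) (f2 ` fv (drop j ss))"
  proof (intro set_eqI iffI)
    fix e assume "e \<in> f ` fv ss"
    then obtain x where x: "x \<in> fv ss" "e = f x" by auto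
    show "e \<in> join (f1 ` fv (take j ss)) (f2 ` fv (drop j ss))"
    proof (cases "hd x < j")
      case True then show ?thesis using x unfolding join_def by (auto simp: f_def fv_take)
    next
      case False then show ?thesis using x us_fv unfolding join_def by (auto simp: f_def)
    qed
  next
    fix e assume "e \<in> join (f1 ` fv (take j ss)) (f2 ` fv (drop j ss))"
    then consider (l) x where "x \<in> fv (take j ss)" "e = 0 # f1 x"
      | (r) y where "y \<in> fv (drop j ss)" "e = 1 # f2 y" unfolding join_def by auto
    then show "e \<in> f ` fv ss"
    proof cases
      case l
      then have "x \<in> fv ss" "hd x < j" by (auto simp: fv_take)
      then show ?thesis using l by (metis f_def image_eqI)
    next
      case r
      have "y \<noteq> []" using r by auto
    then obtain i p where yi: "y = i # p" by (auto simp: neq_Nil_conv)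
      define x where "x = (i + j) # p"
      have "i # p \<in> fv (drop j ss)" using r yi by simp
      then have "x \<in> fv ss" unfolding x_def by (simp only: fv_drop)
      moreover have "\<not> hd x < j" "us x = y" by (auto simp: x_def us_def yi)
      ultimately show ?thesis using r by (metis f_def image_eqI)
    qed
  qed
  show ?thesis using fok nz img by blast
qed

lemma FEn_split: "FEn ss (Node [L, R]) =
  (\<Union>j\<in>{..length ss}. (\<lambda>(E1, E2). join E1 E2) ` (FE (take j ss) L \<times> FE (drop j ss) R))"
proof (intro set_eqI iffI)
  fix E assume "E \<in> FEn ss (Node [L, R])"
  then obtain f where "fok ss (Node [L, R]) f" "E = f ` fv ss" "[] \<notin> E" unfolding FEn_def FE_def by blast
  then obtain j f1 f2 where "j \<le> length ss" "fok (take j ss) L f1" "fok (drop j ss) R f2"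
    "E = join (f1 ` fv (take j ss)) (f2 ` fv (drop j ss))" using split_sub by metis
  then show "E \<in> (\<Union>j\<in>{..length ss}. (\<lambda>(E1, E2). join E1 E2) ` (FE (take j ss) L \<times> FE (drop j ss) R))"
    unfolding FE_def by fastforce
next
  fix E assume "E \<in> (\<Union>j\<in>{..length ss}. (\<lambda>(E1, E2). join E1 E2) ` (FE (take j ss) L \<times> FE (drop j ss) R))"
  then obtain j f1 f2 where "j \<le> length ss" "fok (take j ss) L f1" "fok (drop j ss) R f2"
    "E = join (f1 ` fv (take j ss)) (f2 ` fv (drop j ss))" unfolding FE_def by fastforce
  then obtain f where "fok ss (Node [L, R]) f" "[] \<notin> f ` fv ss" "E = f ` fv ss"
    using split_sup by metis
  then show "E \<in> FEn ss (Node [L, R])" unfolding FEn_def FE_def by blast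
qed



lemma finite_FE[simp]: "finite (FE ss T)"
proof -
  have "FE ss T \<subseteq> Pow (verts T)" unfolding FE_def fok_def by auto
  then show ?thesis by (rule finite_subset) simp
qed

lemma finite_FEr[simp]: "finite (FEr S T)" unfolding FEr_def by simp

lemma finite_FEn[simp]: "finite (FEn ss T)" unfolding FEn_def by simp

lemma card_FE_elem: "E \<in> FE ss T \<Longrightarrow> card E = card (fv ss)"
  unfolding FE_def using fok_inj card_image by blast

lemma card_fv_take_less: assumes "j < j'" "j' \<le> length ss"
  shows "card (fv (take j ss)) < card (fv (take j' ss))"
proof (rule psubset_card_mono)
  show "finite (fv (take j' ss))" by simp
  have "fv (take j ss) \<subseteq> fv (take j' ss)" using assms by (auto simp: fv_take)
  moreover have "[j] \<in> fv (take j' ss)" "[j] \<notin> fv (take j ss)" using assms by auto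
  ultimately show "fv (take j ss) \<subset> fv (take j' ss)" by blast
qed

lemma card_fv_take_inj: assumes "j \<le> length ss" "j' \<le> length ss"
  "card (fv (take j ss)) = card (fv (take j' ss))" shows "j = j'"
proof (cases j j' rule: linorder_cases)
  case less then show ?thesis using card_fv_take_less[OF less assms(2)] assms(3) by simp
next
  case greater then show ?thesis using card_fv_take_less[OF greater assms(1)] assms(3) by simp
qed

lemma join_left: "{w. 0 # w \<in> join E1 E2} = E1" unfolding join_def by auto
lemma join_right: "{w. 1 # w \<in> join E1 E2} = E2" unfolding join_def by auto

lemma card_FEn_split: "card (FEn ss (Node [L, R])) =
  (\<Sum>j\<le>length ss. card (FE (take j ss) L) * card (FE (drop j ss) R))"
proof -
  let ?A = "\<lambda>j. (\<lambda>(E1, E2). join E1 E2) ` (FE (take j ss) L \<times> FE (drop j ss) R)"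
  have inj: "inj_on (\<lambda>(E1, E2). join E1 E2) X" for X
  proof (rule inj_onI, clarify)
    fix a b c d assume e: "join a b = join c d"
    have "a = c" using join_left[of a b] join_left[of c d] e by simp
    moreover have "b = d" using join_right[of a b] join_right[of c d] e by simp
    ultimately show "a = c \<and> b = d" by simp
  qed
  have "card (\<Union>j\<in>{..length ss}. ?A j) = (\<Sum>j\<le>length ss. card (?A j))"
  proof (rule card_UN_disjoint)
    show "\<forall>j\<in>{..length ss}. \<forall>j'\<in>{..length ss}. j \<noteq> j' \<longrightarrow> ?A j \<inter> ?A j' = {}"
    proof (intro ballI impI)
      fix j j' assume jj: "j \<in> {..length ss}" "j' \<in> {..length ss}" "j \<noteq> j'"
      show "?A j \<inter> ?A j' = {}"
      proof (rule ccontr)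
        assume "?A j \<inter> ?A j' \<noteq> {}"
        then obtain a b c d where abcd: "a \<in> FE (take j ss) L" "c \<in> FE (take j' ss) L" "join a b = join c d"
          by auto
        then have "a = c" using join_left[of a b] join_left[of c d] by simp
        then have "card (fv (take j ss)) = card (fv (take j' ss))" using card_FE_elem[OF abcd(1)] card_FE_elem[OF abcd(2)] by simp
        then show False using card_fv_take_inj jj by auto
      qed
    qed
  qed auto
  also have "\<dots> = (\<Sum>j\<le>length ss. card (FE (take j ss) L) * card (FE (drop j ss) R))"
    by (rule sum.cong) (simp_all add: card_image[OF inj] card_cartesian_product)
  finally show ?thesis by (simp add: FEn_split)
qed

lemma card_FE_single: "card (FE [S] T) = card (FEr S T) + card (FEn [S] T)"
proof -
  have "FE [S] T = FEr S T \<union> FEn [S] T" "FEr S T \<inter> FEn [S] T = {}" unfolding FEr_def FEn_def by auto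
  moreover have "finite (FEr S T)" unfolding FEr_def by simp
  ultimately show ?thesis using card_Un_disjoint[of "FEr S T" "FEn [S] T"] by simp
qed

lemma FE_not1: assumes "length ss \<noteq> 1" shows "FEn ss T = FE ss T"
  unfolding FEn_def using FE_Nil_in[OF assms] by auto

lemma card_FEr_Node: "card (FEr (Node ss) T) = card (FEn ss T)"
proof -
  have "inj_on (insert []) (FEn ss T)" unfolding FEn_def inj_on_def
  proof (intro ballI impI)
    fix x y assume "x \<in> {E \<in> FE ss T. [] \<notin> E}" "y \<in> {E \<in> FE ss T. [] \<notin> E}" "insert [] x = insert [] y"
    then show "x = y" by (metis (no_types, lifting) insert_ident mem_Collect_eq)
  qed
  then show ?thesis by (simp add: FEr_Node card_image)
qed

lemma card_FEn_leaf: "card (FEn ss (Node [])) = (if ss = [] then 1 else 0)"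
  by (simp add: FEn_leaf)




datatype bt = Lf | Nd bt bt

fun toP :: "bt \<Rightarrow> ptree" where
  "toP Lf = Node []"
| "toP (Nd l r) = Node [toP l, toP r]"

fun bsize :: "bt \<Rightarrow> nat" where
  "bsize Lf = 1"
| "bsize (Nd l r) = bsize l + bsize r + 1"

definition bts :: "nat \<Rightarrow> bt set" where "bts n = {t. bsize t = n}"

lemma inj_toP: "inj toP"
proof (rule injI)
  fix x y show "toP x = toP y \<Longrightarrow> x = y"
  proof (induction x arbitrary: y)
    case Lf then show ?case by (cases y) auto
  next
    case (Nd l r) then show ?case by (cases y) auto
  qed
qed

lemma verts_Node2: "verts (Node [L, R]) = insert [] (Cons 0 ` verts L \<union> Cons 1 ` verts R)"
proof (intro set_eqI iffI)
  fix x assume "x \<in> verts (Node [L, R])" then show "x \<in> insert [] (Cons 0 ` verts L \<union> Cons 1 ` verts R)"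
    by (cases x) (auto simp del: Cons_in_verts_Node simp: verts2)
qed (auto simp del: Cons_in_verts_Node simp: verts2)

lemma nverts_toP: "nverts (toP t) = bsize t"
proof (induction t)
  case Lf then show ?case by (simp add: nverts_def verts_Node)
next
  case (Nd l r)
  have "card (verts (toP (Nd l r))) = Suc (card (Cons 0 ` verts (toP l) \<union> Cons 1 ` verts (toP r)))"
    by (simp only: toP.simps verts_Node2, subst card_insert_disjoint) auto
  also have "\<dots> = Suc (card (verts (toP l)) + card (verts (toP r)))"
    by (subst card_Un_disjoint) (auto simp: card_image)
  finally show ?case using Nd by (simp add: nverts_def)
qed

definition isbin :: "ptree \<Rightarrow> bool" where
  "isbin T \<longleftrightarrow> (\<forall>p\<in>verts T. outdeg T p = 0 \<or> outdeg T p = 2)"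

lemma isbin_toP: "isbin (toP t)"
proof (induction t)
  case Lf then show ?case by (simp add: isbin_def verts_Node)
next
  case (Nd l r)
  show ?case unfolding isbin_def
  proof
    fix p assume "p \<in> verts (toP (Nd l r))"
    then show "outdeg (toP (Nd l r)) p = 0 \<or> outdeg (toP (Nd l r)) p = 2"
      using Nd unfolding isbin_def by (cases p) (auto simp: less_Suc_eq nth_Cons)
  qed
qed

lemma isbin_range: "isbin T \<Longrightarrow> T \<in> range toP"
proof (induction T)
  case (Node ts)
  have "outdeg (Node ts) [] = 0 \<or> outdeg (Node ts) [] = 2" using Node.prems verts_Nil unfolding isbin_def by blast
  then have "length ts = 0 \<or> length ts = 2" by simp
  then show ?case
  proof
    assume "length ts = 0" then have "Node ts = toP Lf" by simp
    then show ?thesis by blast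
  next
    assume l2: "length ts = 2"
    then obtain a b where ab: "ts = [a, b]"
      by (metis (no_types, opaque_lifting) One_nat_def Suc_length_conv length_0_conv numeral_2_eq_2)
    have sub: "isbin c" if "c = ts ! i" "i < 2" for c i
      unfolding isbin_def
    proof
      fix p assume "p \<in> verts c"
      then have "i # p \<in> verts (Node ts)" using that l2 by simp
      then have "outdeg (Node ts) (i # p) = 0 \<or> outdeg (Node ts) (i # p) = 2" using Node.prems unfolding isbin_def by blast
      then show "outdeg c p = 0 \<or> outdeg c p = 2" using that l2 by simp
    qed
    have "isbin a" "isbin b" using sub[of a 0] sub[of b 1] ab by auto
    moreover have "a \<in> set ts" "b \<in> set ts" using ab by auto
    ultimately obtain l r where "a = toP l" "b = toP r" using Node.IH by blast
    then have "Node ts = toP (Nd l r)" using ab by simp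
    then show ?thesis by blast
  qed
qed

lemma binary_trees_eq: "binary_trees n = toP ` bts n"
proof (intro set_eqI iffI)
  fix T assume "T \<in> binary_trees n"
  then have "isbin T" "nverts T = n" unfolding binary_trees_def isbin_def by auto
  then obtain t where "T = toP t" using isbin_range by blast
  then show "T \<in> toP ` bts n" using \<open>nverts T = n\<close> by (simp add: bts_def nverts_toP)
next
  fix T assume "T \<in> toP ` bts n"
  then obtain t where "T = toP t" "bsize t = n" by (auto simp: bts_def)
  then show "T \<in> binary_trees n" using isbin_toP[of t] unfolding binary_trees_def isbin_def
    by (simp add: nverts_toP)
qed

lemma bsize_pos: "bsize t \<ge> 1" by (cases t) auto

lemma bts_decomp: "bts n = (if n = 1 then {Lf} else {}) \<union> (\<Union>i<n. case_prod Nd ` (bts i \<times> bts (n - 1 - i)))"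
proof (intro set_eqI iffI)
  fix t assume "t \<in> bts n"
  then show "t \<in> (if n = 1 then {Lf} else {}) \<union> (\<Union>i<n. case_prod Nd ` (bts i \<times> bts (n - 1 - i)))"
  proof (cases t)
    case Lf then show ?thesis using \<open>t \<in> bts n\<close> by (auto simp: bts_def)
  next
    case (Nd l r)
    then have "bsize l < n" "bsize r = n - 1 - bsize l" using \<open>t \<in> bts n\<close> by (auto simp: bts_def)
    then have "Nd l r \<in> case_prod Nd ` (bts (bsize l) \<times> bts (n - 1 - bsize l))"
      by (intro image_eqI[of _ _ "(l, r)"]) (auto simp: bts_def)
    then show ?thesis using Nd \<open>bsize l < n\<close> by blast
  qed
next
  fix t assume "t \<in> (if n = 1 then {Lf} else {}) \<union> (\<Union>i<n. case_prod Nd ` (bts i \<times> bts (n - 1 - i)))"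
  then show "t \<in> bts n"
  proof
    assume "t \<in> (if n = 1 then {Lf} else {})" then show ?thesis by (auto simp: bts_def split: if_splits)
  next
    assume "t \<in> (\<Union>i<n. case_prod Nd ` (bts i \<times> bts (n - 1 - i)))"
    then obtain i l r where "i < n" "t = Nd l r" "bsize l = i" "bsize r = n - 1 - i" by (auto simp: bts_def)
    then show ?thesis by (auto simp: bts_def)
  qed
qed

lemma finite_bts[simp]: "finite (bts n)"
proof (induction n rule: less_induct)
  case (less n)
  have "finite (case_prod Nd ` (bts i \<times> bts (n - 1 - i)))" if "i < n" for i
    using less that by (intro finite_imageI finite_cartesian_product) auto
  then show ?case unfolding bts_decomp[of n] by auto
qed

definition gf :: "(bt \<Rightarrow> real) \<Rightarrow> real fps" where
  "gf ph = Abs_fps (\<lambda>n. \<Sum>t\<in>bts n. ph t)"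

lemma gf_nth: "gf ph $ n = (\<Sum>t\<in>bts n. ph t)" by (simp add: gf_def)

lemma gf_add: "gf (\<lambda>t. ph t + ps t) = gf ph + gf ps"
  by (rule fps_ext) (simp add: gf_nth sum.distrib)

lemma gf_sum: "gf (\<lambda>t. \<Sum>j\<in>J. ph j t) = (\<Sum>j\<in>J. gf (ph j))"
  by (rule fps_ext) (simp add: gf_nth fps_sum_nth sum.swap[of _ J])

lemma gf_cmult: "gf (\<lambda>t. c * ph t) = fps_const c * gf ph"
  by (rule fps_ext) (simp add: gf_nth sum_distrib_left)

lemma gf_Lf: "gf (\<lambda>t. case t of Lf \<Rightarrow> c | Nd l r \<Rightarrow> 0) = fps_const c * fps_X"
proof (rule fps_ext)
  fix n
  have "(\<Sum>t\<in>bts n. case t of Lf \<Rightarrow> c | Nd l r \<Rightarrow> 0) = (\<Sum>t\<in>bts n. if t = Lf then c else 0)"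
    by (rule sum.cong) (auto split: bt.splits)
  also have "\<dots> = (if Lf \<in> bts n then c else 0)" by (simp add: sum.delta)
  also have "\<dots> = (if n = 1 then c else 0)" by (auto simp: bts_def)
  finally show "gf (\<lambda>t. case t of Lf \<Rightarrow> c | Nd l r \<Rightarrow> 0) $ n = (fps_const c * fps_X) $ n"
    by (simp add: gf_nth fps_X_def)
qed

lemma gf_Nd: "gf (\<lambda>t. case t of Lf \<Rightarrow> 0 | Nd l r \<Rightarrow> ph l * ps r) = fps_X * (gf ph * gf ps)"
proof (rule fps_ext)
  fix n
  let ?h = "\<lambda>t. case t of Lf \<Rightarrow> 0 | Nd l r \<Rightarrow> ph l * ps r"
  let ?U = "\<Union>i<n. case_prod Nd ` (bts i \<times> bts (n - 1 - i))"
  have "(\<Sum>t\<in>bts n. ?h t) = (\<Sum>t\<in>(if n = 1 then {Lf} else {}). ?h t) + (\<Sum>t\<in>?U. ?h t)"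
    by (subst bts_decomp, rule sum.union_disjoint) auto
  also have "(\<Sum>t\<in>(if n = 1 then {Lf} else {}). ?h t) = 0" by simp
  also have "(\<Sum>t\<in>?U. ?h t) = (\<Sum>i<n. \<Sum>t\<in>case_prod Nd ` (bts i \<times> bts (n - 1 - i)). ?h t)"
    by (rule sum.UNION_disjoint) (simp, simp, auto simp: bts_def)
  also have "\<dots> = (\<Sum>i<n. gf ph $ i * gf ps $ (n - 1 - i))"
  proof (rule sum.cong)
    fix i
    have "inj_on (case_prod Nd) (bts i \<times> bts (n - 1 - i))" by (auto simp: inj_on_def)
    then have "(\<Sum>t\<in>case_prod Nd ` (bts i \<times> bts (n - 1 - i)). ?h t) = (\<Sum>p\<in>bts i \<times> bts (n - 1 - i). ?h (case_prod Nd p))"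
      by (rule sum.reindex_cong) auto
    also have "\<dots> = (\<Sum>l\<in>bts i. \<Sum>r\<in>bts (n - 1 - i). ph l * ps r)"
      by (subst sum.cartesian_product) (auto intro!: sum.cong)
    also have "\<dots> = gf ph $ i * gf ps $ (n - 1 - i)" by (simp add: gf_nth sum_product)
    finally show "(\<Sum>t\<in>case_prod Nd ` (bts i \<times> bts (n - 1 - i)). ?h t) = gf ph $ i * gf ps $ (n - 1 - i)" .
  qed simp
  also have "0 + (\<Sum>i<n. gf ph $ i * gf ps $ (n - 1 - i)) = (fps_X * (gf ph * gf ps)) $ n"
  proof (cases n)
    case 0 then show ?thesis by simp
  next
    case (Suc m)
    then show ?thesis by (simp only: fps_X_mult_nth) (simp add: fps_mult_nth atLeast0AtMost lessThan_Suc_atMost)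
  qed
  finally show "gf ?h $ n = (fps_X * (gf ph * gf ps)) $ n" by (simp add: gf_nth)
qed




definition Fc :: "ptree list \<Rightarrow> bt \<Rightarrow> real" where "Fc ss t = real (card (FE ss (toP t)))"
definition Nc :: "ptree list \<Rightarrow> bt \<Rightarrow> real" where "Nc ss t = real (card (FEn ss (toP t)))"
definition Rc :: "ptree \<Rightarrow> bt \<Rightarrow> real" where "Rc S t = real (card (FEr S (toP t)))"

definition G :: "ptree list \<Rightarrow> real fps" where "G ss = gf (Fc ss)"
definition Nn :: "ptree list \<Rightarrow> real fps" where "Nn ss = gf (Nc ss)"
definition Rr :: "ptree \<Rightarrow> real fps" where "Rr S = gf (Rc S)"

lemma A_fps_G: "A_fps S = G [S]"
proof (rule fps_ext)
  fix n
  have "A_fps S $ n = real (\<Sum>T\<in>toP ` bts n. card (embeddings S T))"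
    by (simp add: A_fps_def emb_count_family_def emb_count_def binary_trees_eq)
  also have "\<dots> = real (\<Sum>t\<in>bts n. card (FE [S] (toP t)))"
    using inj_toP by (simp add: sum.reindex inj_on_def emb_FE)
  also have "\<dots> = G [S] $ n" by (simp add: G_def gf_nth Fc_def)
  finally show "A_fps S $ n = G [S] $ n" .
qed

lemma Nc_eq: "Nc ss t = (case t of Lf \<Rightarrow> (if ss = [] then 1 else 0) | Nd l r \<Rightarrow> 0)
   + (\<Sum>j\<le>length ss. case t of Lf \<Rightarrow> 0 | Nd l r \<Rightarrow> Fc (take j ss) l * Fc (drop j ss) r)"
proof (cases t)
  case Lf then show ?thesis by (simp add: Nc_def card_FEn_leaf)
next
  case (Nd l r) then show ?thesis by (simp add: Nc_def Fc_def card_FEn_split)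
qed

lemma Nn_eq: "Nn ss = fps_const (if ss = [] then 1 else 0) * fps_X
   + (\<Sum>j\<le>length ss. fps_X * (G (take j ss) * G (drop j ss)))"
proof -
  have "Nn ss = gf (\<lambda>t. (case t of Lf \<Rightarrow> (if ss = [] then 1 else 0) | Nd l r \<Rightarrow> 0)
   + (\<Sum>j\<le>length ss. case t of Lf \<Rightarrow> 0 | Nd l r \<Rightarrow> Fc (take j ss) l * Fc (drop j ss) r))"
    unfolding Nn_def by (rule arg_cong[of _ _ gf]) (simp only: fun_eq_iff Nc_eq, simp)
  also have "\<dots> = fps_const (if ss = [] then 1 else 0) * fps_X
   + (\<Sum>j\<le>length ss. fps_X * (G (take j ss) * G (drop j ss)))"
    by (simp only: gf_add gf_sum gf_Lf gf_Nd G_def)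
  finally show ?thesis .
qed

lemma G_single: "G [S] = Rr S + Nn [S]"
proof -
  have "G [S] = gf (\<lambda>t. Rc S t + Nc [S] t)"
    unfolding G_def by (rule arg_cong[of _ _ gf]) (simp add: fun_eq_iff Fc_def Rc_def Nc_def card_FE_single)
  then show ?thesis by (simp add: gf_add Rr_def Nn_def)
qed

lemma G_not1: "length ss \<noteq> 1 \<Longrightarrow> G ss = Nn ss"
  unfolding G_def Nn_def Fc_def Nc_def by (simp add: FE_not1)

lemma Rr_Node: "Rr (Node ss) = Nn ss"
  unfolding Rr_def Nn_def Rc_def Nc_def by (simp add: card_FEr_Node)




definition Bt :: "real fps" where "Bt = G []"

lemma Bt_eq: "Bt = fps_X + fps_X * Bt ^ 2"
proof -
  have "Bt = Nn []" unfolding Bt_def by (simp add: G_not1)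
  also have "\<dots> = fps_X + fps_X * (G [] * G [])" by (simp add: Nn_eq)
  finally show ?thesis by (simp add: Bt_def power2_eq_square)
qed

lemma binom_rec: "(2 * k + 2 choose (k + 1)) * (k + 1) = 2 * (2 * k + 1) * (2 * k choose k)"
proof -
  define X where "X = (2 * k + 2 choose (k + 1))"
  define Y where "Y = (2 * k + 1 choose k)"
  define Z where "Z = (2 * k choose k)"
  have a: "(2 * k + 2) * Y = X * (k + 1)"
    unfolding X_def Y_def using Suc_times_binomial_eq[of "2 * k + 1" k] by simp
  have b: "Suc k * (Suc (k + k) choose Suc k) = Suc k * (Suc (k + k) choose k)"
    by (rule Suc_times_binomial_add)
  then have b': "(Suc (k + k) choose Suc k) = (Suc (k + k) choose k)"
    by (simp only: mult_cancel1) simp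
  have c0: "Suc (2 * k) * (2 * k choose k) = (Suc (2 * k) choose Suc k) * Suc k"
    by (rule Suc_times_binomial_eq)
  have c: "(2 * k + 1) * Z = Y * (k + 1)"
    unfolding Y_def Z_def using c0 b' by (simp add: mult_2)
  have "X * (k + 1) = 2 * (Y * (k + 1))" using a by (simp add: algebra_simps)
  also have "\<dots> = 2 * (2 * k + 1) * Z" using c by simp
  finally show ?thesis unfolding X_def Z_def .
qed

lemma catalan_rec: "real (k + 2) * catalan (k + 1) = real (2 * (2 * k + 1)) * catalan k"
proof -
  define X where "X = (2 * k + 2 choose (k + 1))"
  define Z where "Z = (2 * k choose k)"
  have r: "real X * real (k + 1) = real (2 * (2 * k + 1)) * real Z"
    unfolding X_def Z_def by (simp only: of_nat_mult[symmetric] binom_rec)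
  have c1: "catalan (k + 1) = real X / real (k + 2)"
  proof -
    have "2 * (k + 1) = 2 * k + 2" by simp
    then show ?thesis unfolding catalan_def X_def by (subst \<open>2 * (k + 1) = 2 * k + 2\<close>) simp
  qed
  have c0: "catalan k = real Z / real (k + 1)" unfolding catalan_def Z_def by simp
  have x: "real X = real (2 * (2 * k + 1)) * real Z / real (k + 1)"
    by (simp only: r[symmetric]) simp
  have "real (k + 2) * (real X / real (k + 2)) = real X" by simp
  then show ?thesis unfolding c1 c0 x by simp
qed

lemma catalan_0[simp]: "catalan 0 = 1" by (simp add: catalan_def)
lemma catalan_1[simp]: "catalan 1 = 1" by (simp add: catalan_def)

definition recB :: "real fps \<Rightarrow> bool" where
  "recB b \<longleftrightarrow> (\<forall>m. real (m + 1) * b $ m = (if m = 1 then 2 else 0) + (if m \<ge> 3 then 4 * real (m - 2) * b $ (m - 2) else 0))"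

lemma recB_unique: assumes "recB a" "recB b" shows "a $ m = b $ m"
proof (induction m rule: less_induct)
  case (less m)
  have ea: "real (m + 1) * a $ m = (if m = 1 then 2 else 0) + (if m \<ge> 3 then 4 * real (m - 2) * a $ (m - 2) else 0)"
    using assms(1) unfolding recB_def by blast
  have eb: "real (m + 1) * b $ m = (if m = 1 then 2 else 0) + (if m \<ge> 3 then 4 * real (m - 2) * b $ (m - 2) else 0)"
    using assms(2) unfolding recB_def by blast
  have "real (m + 1) * a $ m = real (m + 1) * b $ m"
  proof (cases "m \<ge> 3")
    case True
    then have "a $ (m - 2) = b $ (m - 2)" using less by simp
    then show ?thesis using ea eb by simp
  next
    case False then show ?thesis using ea eb by simp
  qed
  then show ?case by simp
qed

lemma Bfps_nth: "Bfps $ m = (if odd m then catalan ((m - 1) div 2) else 0)"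
  by (simp add: Bfps_def)

lemma recB_Bfps: "recB Bfps"
  unfolding recB_def
proof
  fix m
  show "real (m + 1) * Bfps $ m = (if m = 1 then 2 else 0) + (if m \<ge> 3 then 4 * real (m - 2) * Bfps $ (m - 2) else 0)"
  proof (cases "odd m")
    case False
    then have "m \<noteq> 1" "m \<ge> 3 \<longrightarrow> even (m - 2)" by auto
    then show ?thesis using False by (simp add: Bfps_nth)
  next
    case True
    then obtain k where k: "m = 2 * k + 1" by (metis oddE)
    show ?thesis
    proof (cases k)
      case 0 then show ?thesis using k by (simp add: Bfps_nth)
    next
      case (Suc k')
      then have m: "m = 2 * k' + 3" "m - 2 = 2 * k' + 1" using k by auto
      have "real (m + 1) * Bfps $ m = 2 * (real (k' + 2) * catalan (k' + 1))"
        using m by (simp add: Bfps_nth algebra_simps)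
      also have "\<dots> = 2 * (real (2 * (2 * k' + 1)) * catalan k')" by (simp only: catalan_rec)
      also have "\<dots> = 4 * real (m - 2) * Bfps $ (m - 2)" using m by (simp add: Bfps_nth algebra_simps)
      finally show ?thesis using m by simp
    qed
  qed
qed

lemma suc3: "\<not> m < 3 \<Longrightarrow> Suc (m - 3) = m - 2" by arith

lemma ode_coeffs:
  assumes "fps_X * fps_deriv b - fps_const 4 * (fps_X ^ 3 * fps_deriv b) = fps_const 2 * fps_X - b"
  shows "recB b"
  unfolding recB_def
proof
  fix m
  have "(fps_X * fps_deriv b - fps_const 4 * (fps_X ^ 3 * fps_deriv b)) $ m = (fps_const 2 * fps_X - b) $ m"
    using assms by simp
  then have e: "(if m = 0 then 0 else real m * b $ m) - 4 * (if m < 3 then 0 else real (m - 2) * b $ (m - 2))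
      = (if m = 1 then 2 else 0) - b $ m"
    by (auto simp: fps_X_power_mult_nth suc3 of_nat_diff)
  show "real (m + 1) * b $ m = (if m = 1 then 2 else 0) + (if m \<ge> 3 then 4 * real (m - 2) * b $ (m - 2) else 0)"
  proof (cases "m < 3")
    case True then show ?thesis using e by (cases "m = 0") (auto simp: algebra_simps)
  next
    case False
    show ?thesis using e False by (simp add: algebra_simps)
  qed
qed

lemma ring_ode:
  fixes x b d :: "'a::comm_ring_1"
  assumes E1: "b = x + x * b ^ 2" and E2: "d * (1 - 2 * x * b) = 1 + b ^ 2"
  shows "(x * d - 4 * (x ^ 3 * d)) * (1 - 2 * x * b) = (2 * x - b) * (1 - 2 * x * b)"
proof -
  have "(x * d - 4 * (x ^ 3 * d)) * (1 - 2 * x * b) = (x - 4 * x ^ 3) * (d * (1 - 2 * x * b))"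
    by (simp add: algebra_simps)
  also have "\<dots> = (x - 4 * x ^ 3) * (1 + b ^ 2)" by (simp only: E2)
  also have "\<dots> = (2 * x - b) * (1 - 2 * x * b) + (1 + 4 * x ^ 2) * (b - x - x * b ^ 2)"
    by (simp add: algebra_simps power2_eq_square power3_eq_cube)
  also have "b - x - x * b ^ 2 = 0" using E1 by (simp add: algebra_simps)
  finally show ?thesis by simp
qed

lemma Bt_ode: "fps_X * fps_deriv Bt - fps_const 4 * (fps_X ^ 3 * fps_deriv Bt) = fps_const 2 * fps_X - Bt"
proof -
  let ?b = Bt and ?d = "fps_deriv Bt"
  have E1: "?b = fps_X + fps_X * ?b ^ 2" by (rule Bt_eq)
  have "?d = fps_deriv (fps_X + fps_X * (?b * ?b))" using E1 by (simp add: power2_eq_square)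
  then have E2': "?d = 1 + ?b * ?b + fps_X * (?d * ?b + ?b * ?d)"
    by (simp add: algebra_simps)
  have E2: "?d * (1 - 2 * fps_X * ?b) = 1 + ?b ^ 2"
  proof -
    have "?d * (1 - 2 * fps_X * ?b) = ?d - fps_X * (?d * ?b + ?b * ?d)" by (simp add: algebra_simps)
    also have "\<dots> = 1 + ?b ^ 2" by (subst E2') (simp add: power2_eq_square)
    finally show ?thesis .
  qed
  have nz: "1 - 2 * fps_X * ?b \<noteq> 0"
  proof
    assume "1 - 2 * fps_X * ?b = 0"
    then have "(1 - 2 * fps_X * ?b) $ 0 = 0" by simp
    then show False by simp
  qed
  have "(fps_X * ?d - 4 * (fps_X ^ 3 * ?d)) * (1 - 2 * fps_X * ?b) = (2 * fps_X - ?b) * (1 - 2 * fps_X * ?b)"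
    by (rule ring_ode[OF E1 E2])
  then have "fps_X * ?d - 4 * (fps_X ^ 3 * ?d) = 2 * fps_X - ?b" using nz by simp
  then show ?thesis by (simp only: numeral_fps_const)
qed

lemma Bt_Bfps: "Bt = Bfps"
  using recB_unique[OF ode_coeffs[OF Bt_ode] recB_Bfps] by (simp add: fps_eq_iff)




lemma Bfps_eq: "Bfps = fps_X + fps_X * Bfps ^ 2"
  using Bt_eq by (simp add: Bt_Bfps)

lemma catalan_conv: "(\<Sum>i\<le>n. catalan i * catalan (n - i)) = catalan (n + 1)"
proof -
  let ?f = "\<lambda>a. Bfps $ a * Bfps $ (2 * n + 2 - a)"
  have "catalan (n + 1) = Bfps $ (2 * n + 3)" by (simp add: Bfps_nth)
  also have "\<dots> = (fps_X + fps_X * Bfps ^ 2) $ (2 * n + 3)" using Bfps_eq by (metis)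
  also have "\<dots> = (Bfps * Bfps) $ (2 * n + 2)" by (simp add: power2_eq_square)
  also have "\<dots> = (\<Sum>a=0..2 * n + 2. ?f a)" by (simp add: fps_mult_nth)
  also have "\<dots> = (\<Sum>a\<in>(\<lambda>i. 2 * i + 1) ` {..n}. ?f a)"
  proof (rule sum.mono_neutral_right)
    show "(\<lambda>i. 2 * i + 1) ` {..n} \<subseteq> {0..2 * n + 2}" by auto
    show "\<forall>a\<in>{0..2 * n + 2} - (\<lambda>i. 2 * i + 1) ` {..n}. ?f a = 0"
    proof
      fix a assume a: "a \<in> {0..2 * n + 2} - (\<lambda>i. 2 * i + 1) ` {..n}"
      show "?f a = 0"
      proof (cases "odd a")
        case True
        then obtain i where "a = 2 * i + 1" by (metis oddE)
        then show ?thesis using a by auto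
      next
        case False then show ?thesis by (simp add: Bfps_nth)
      qed
    qed
  qed simp
  also have "\<dots> = (\<Sum>i\<le>n. ?f (2 * i + 1))"
    by (rule sum.reindex_cong[where l="\<lambda>i. 2 * i + 1"]) (auto simp: inj_on_def)
  also have "\<dots> = (\<Sum>i\<le>n. catalan i * catalan (n - i))"
  proof (rule sum.cong)
    fix i assume "i \<in> {..n}"
    then have "2 * n + 2 - (2 * i + 1) = 2 * (n - i) + 1" by auto
    then show "?f (2 * i + 1) = catalan i * catalan (n - i)" by (simp add: Bfps_nth)
  qed simp
  finally show ?thesis by simp
qed



lemma verts_Node_parts:
  "[] \<notin> (\<Union>i<length ss. Cons i ` verts (ss ! i))"
  "finite (\<Union>i<length ss. Cons i ` verts (ss ! i))"
  by auto

lemma catalan_Suc0[simp]: "catalan (Suc 0) = 1" by (simp add: catalan_def)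

lemma prod_verts_Node:
  fixes g :: "nat \<Rightarrow> 'a::comm_monoid_mult"
  shows "(\<Prod>p\<in>verts (Node ss). g (outdeg (Node ss) p)) =
    g (length ss) * (\<Prod>i<length ss. \<Prod>p\<in>verts (ss ! i). g (outdeg (ss ! i) p))"
proof -
  have "(\<Prod>p\<in>verts (Node ss). g (outdeg (Node ss) p)) =
      g (outdeg (Node ss) []) * (\<Prod>p\<in>(\<Union>i<length ss. Cons i ` verts (ss ! i)). g (outdeg (Node ss) p))"
    unfolding verts_Node[of ss] using verts_Node_parts by (simp add: prod.insert)
  also have "(\<Prod>p\<in>(\<Union>i<length ss. Cons i ` verts (ss ! i)). g (outdeg (Node ss) p)) =
      (\<Prod>i<length ss. \<Prod>p\<in>Cons i ` verts (ss ! i). g (outdeg (Node ss) p))"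
    by (rule prod.UNION_disjoint) auto
  also have "\<dots> = (\<Prod>i<length ss. \<Prod>p\<in>verts (ss ! i). g (outdeg (ss ! i) p))"
  proof (rule prod.cong)
    fix i assume "i \<in> {..<length ss}"
    then show "(\<Prod>p\<in>Cons i ` verts (ss ! i). g (outdeg (Node ss) p)) = (\<Prod>p\<in>verts (ss ! i). g (outdeg (ss ! i) p))"
      by (subst prod.reindex) auto
  qed simp
  finally show ?thesis by simp
qed

lemma sum_verts_Node:
  fixes g :: "nat \<Rightarrow> 'a::comm_monoid_add"
  shows "(\<Sum>p\<in>verts (Node ss). g (outdeg (Node ss) p)) =
    g (length ss) + (\<Sum>i<length ss. \<Sum>p\<in>verts (ss ! i). g (outdeg (ss ! i) p))"
proof -
  have "(\<Sum>p\<in>verts (Node ss). g (outdeg (Node ss) p)) =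
      g (outdeg (Node ss) []) + (\<Sum>p\<in>(\<Union>i<length ss. Cons i ` verts (ss ! i)). g (outdeg (Node ss) p))"
    unfolding verts_Node[of ss] using verts_Node_parts by (simp add: sum.insert)
  also have "(\<Sum>p\<in>(\<Union>i<length ss. Cons i ` verts (ss ! i)). g (outdeg (Node ss) p)) =
      (\<Sum>i<length ss. \<Sum>p\<in>Cons i ` verts (ss ! i). g (outdeg (Node ss) p))"
    by (rule sum.UNION_disjoint) auto
  also have "\<dots> = (\<Sum>i<length ss. \<Sum>p\<in>verts (ss ! i). g (outdeg (ss ! i) p))"
  proof (rule sum.cong)
    fix i assume "i \<in> {..<length ss}"
    then show "(\<Sum>p\<in>Cons i ` verts (ss ! i). g (outdeg (Node ss) p)) = (\<Sum>p\<in>verts (ss ! i). g (outdeg (ss ! i) p))"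
      by (subst sum.reindex) auto
  qed simp
  finally show ?thesis by simp
qed

lemma nverts_sum: "nverts t = (\<Sum>p\<in>verts t. (\<lambda>d. 1::nat) (outdeg t p))"
  by (simp add: nverts_def)

lemma degdist_sum: "degdist t d = (\<Sum>p\<in>verts t. (\<lambda>e. if e = d then 1::nat else 0) (outdeg t p))"
proof -
  have "degdist t d = (\<Sum>p\<in>{p \<in> verts t. outdeg t p = d}. 1::nat)" by (simp add: degdist_def)
  also have "\<dots> = (\<Sum>p\<in>verts t. if outdeg t p = d then 1 else 0)"
    by (rule sum.inter_filter) simp
  finally show ?thesis by simp
qed

lemma nverts_Node: "nverts (Node ss) = 1 + (\<Sum>i<length ss. nverts (ss ! i))"
  unfolding nverts_def using sum_verts_Node[of "\<lambda>d. 1::nat" ss] by simp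

lemma degdist_Node: "degdist (Node ss) d = (if length ss = d then 1 else 0) + (\<Sum>i<length ss. degdist (ss ! i) d)"
  unfolding degdist_sum using sum_verts_Node[of "\<lambda>e. if e = d then 1::nat else 0" ss] by simp

lemma nverts_pos: "nverts t \<ge> 1"
proof -
  have "[] \<in> verts t" by simp
  then have "verts t \<noteq> {}" by blast
  then show ?thesis unfolding nverts_def by (simp add: Suc_leI card_gt_0_iff)
qed

lemma leaves_pos: "degdist t 0 \<ge> 1"
proof (induction t)
  case (Node ss)
  show ?case
  proof (cases ss)
    case Nil then show ?thesis by (simp add: degdist_Node)
  next
    case (Cons S ss')
    then have "S \<in> set ss" by simp
    then have "degdist S 0 \<ge> 1" using Node.IH by blast
    moreover have "degdist S 0 \<le> (\<Sum>i<length ss. degdist (ss ! i) 0)"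
      using Cons member_le_sum[of 0 "{..<length ss}" "\<lambda>i. degdist (ss ! i) 0"] by simp
    ultimately show ?thesis by (simp add: degdist_Node)
  qed
qed

lemma outdeg_lt: assumes "p \<in> verts t" shows "outdeg t p < nverts t"
proof -
  have "insert p ((\<lambda>j. p @ [j]) ` {..<outdeg t p}) \<subseteq> verts t" using assms by (auto simp: verts_snoc)
  then have "card (insert p ((\<lambda>j. p @ [j]) ` {..<outdeg t p})) \<le> nverts t"
    unfolding nverts_def by (rule card_mono[OF finite_verts])
  moreover have "card (insert p ((\<lambda>j. p @ [j]) ` {..<outdeg t p})) = Suc (outdeg t p)"
    by (subst card_insert_disjoint) (auto simp: card_image inj_on_def)
  ultimately show ?thesis by simp
qed

lemma K_eq: "(\<Prod>i\<in>{3..nverts t - 1}. catalan (i - 1) ^ degdist t i) = (\<Prod>p\<in>verts t. catalan (outdeg t p - 1))"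
proof -
  let ?M = "nverts t"
  have c: "catalan (i - 1) = 1" if "i \<le> 2" for i
  proof -
    have "i - 1 = 0 \<or> i - 1 = 1" using that by auto
    then show ?thesis by auto
  qed
  have d0: "degdist t i = 0" if "i \<ge> ?M" for i
  proof -
    have "{p \<in> verts t. outdeg t p = i} = {}" using outdeg_lt that by fastforce
    then show ?thesis by (simp add: degdist_def)
  qed
  have "(\<Prod>i\<in>{3..?M - 1}. catalan (i - 1) ^ degdist t i) = (\<Prod>i\<in>{0..?M}. catalan (i - 1) ^ degdist t i)"
  proof (rule prod.mono_neutral_left)
    show "\<forall>i\<in>{0..?M} - {3..?M - 1}. catalan (i - 1) ^ degdist t i = 1"
    proof
      fix i assume "i \<in> {0..?M} - {3..?M - 1}"
      then have "i \<le> 2 \<or> i \<ge> ?M" by auto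
      then show "catalan (i - 1) ^ degdist t i = 1" using c d0 by auto
    qed
  qed auto
  also have "\<dots> = (\<Prod>i\<in>outdeg t ` verts t. catalan (i - 1) ^ degdist t i)"
  proof (rule prod.mono_neutral_right)
    show "outdeg t ` verts t \<subseteq> {0..?M}" using outdeg_lt by fastforce
    show "\<forall>i\<in>{0..?M} - outdeg t ` verts t. catalan (i - 1) ^ degdist t i = 1"
    proof
      fix i assume "i \<in> {0..?M} - outdeg t ` verts t"
      then have "{p \<in> verts t. outdeg t p = i} = {}" by auto
      then have "degdist t i = 0" unfolding degdist_def by (simp only: card.empty)
      then show "catalan (i - 1) ^ degdist t i = 1" by simp
    qed
  qed auto
  also have "\<dots> = (\<Prod>i\<in>outdeg t ` verts t. \<Prod>p\<in>{p \<in> verts t. outdeg t p = i}. catalan (outdeg t p - 1))"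
    by (rule prod.cong) (auto simp: degdist_def)
  also have "\<dots> = (\<Prod>p\<in>verts t. catalan (outdeg t p - 1))"
    by (rule prod.image_gen[symmetric]) simp
  finally show ?thesis .
qed

lemma prod_list_nth: "prod_list (map g ss) = (\<Prod>i<length ss. g (ss ! i))"
proof (induction ss)
  case Nil then show ?case by simp
next
  case (Cons a ss) then show ?case
    by (simp only: list.map prod_list.Cons length_Cons prod.lessThan_Suc_shift nth_Cons_0 nth_Cons_Suc)
qed




lemma fps_const_sum: "fps_const (\<Sum>i\<in>A. f i) = (\<Sum>i\<in>A. fps_const (f i) :: 'a::comm_monoid_add fps)"
  by (induction A rule: infinite_finite_induct) (simp_all add: fps_const_add[symmetric])

lemma fps_const_prod: "fps_const (\<Prod>i\<in>A. f i) = (\<Prod>i\<in>A. fps_const (f i) :: 'a::comm_ring_1 fps)"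
  by (induction A rule: infinite_finite_induct) (simp_all add: fps_const_mult[symmetric])

definition D :: "real fps" where "D = inverse (1 - 2 * fps_X * Bt)"

lemma D_mult: "D * (1 - 2 * fps_X * Bt) = 1"
  unfolding D_def by (rule inverse_mult_eq_1) simp

lemma solveD: assumes "a = b + 2 * fps_X * Bt * a" shows "a = D * b"
proof -
  have ab: "a * (1 - 2 * fps_X * Bt) = b" using assms by (simp add: algebra_simps)
  have "a = (D * (1 - 2 * fps_X * Bt)) * a" using D_mult by simp
  also have "\<dots> = D * (a * (1 - 2 * fps_X * Bt))" by (simp only: ac_simps)
  also have "\<dots> = D * b" using ab by simp
  finally show ?thesis .
qed

lemma G_Nil: "G [] = Bt" by (simp add: Bt_def)

lemma G_single_D: "G [S] = D * Rr S"
proof (rule solveD)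
  have "Nn [S] = fps_X * (G [] * G [S]) + fps_X * (G [S] * G [])"
    by (simp add: Nn_eq)
  then show "G [S] = Rr S + 2 * fps_X * Bt * G [S]"
    using G_single[of S] by (simp add: G_Nil algebra_simps)
qed

lemma prod_take_drop: "prod_list (map g (take j ss)) * prod_list (map g (drop j ss)) = prod_list (map g ss)"
  by (metis map_append prod_list.append append_take_drop_id)

lemma forest: "length ss = Suc n \<Longrightarrow>
  G ss = fps_const (catalan n) * fps_X ^ n * D ^ n * prod_list (map (\<lambda>S. G [S]) ss)"
proof (induction n arbitrary: ss rule: less_induct)
  case (less n)
  let ?P = "\<lambda>xs. prod_list (map (\<lambda>S. G [S]) xs)"
  show ?case
  proof (cases n)
    case 0
    then obtain S where "ss = [S]" using less.prems by (metis Suc_length_conv length_0_conv)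
    then show ?thesis using 0 by simp
  next
    case (Suc n')
    let ?k = "Suc (Suc n')"
    have lk: "length ss = ?k" using less.prems Suc by simp
    have ne: "ss \<noteq> []" using lk by auto
    let ?h = "\<lambda>j. fps_X * (G (take j ss) * G (drop j ss))"
    have "G ss = Nn ss" using lk by (simp add: G_not1)
    also have "\<dots> = (\<Sum>j\<le>?k. ?h j)" using ne lk by (simp add: Nn_eq)
    also have "\<dots> = ?h 0 + (\<Sum>j\<le>n'. ?h (Suc j)) + ?h ?k"
      using sum.atMost_Suc[of ?h "Suc n'"] sum.atMost_Suc_shift[of ?h n'] by simp
    also have "?h 0 = fps_X * (Bt * G ss)" by (simp add: G_Nil)
    also have "?h ?k = fps_X * (G ss * Bt)" using lk by (simp add: G_Nil)
    also have "(\<Sum>j\<le>n'. ?h (Suc j)) = (\<Sum>j\<le>n'. fps_X * (fps_const (catalan j * catalan (n' - j)) * fps_X ^ n' * D ^ n' * ?P ss))"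
    proof (rule sum.cong)
      fix j assume j: "j \<in> {..n'}"
      have l1: "length (take (Suc j) ss) = Suc j" using lk j by simp
      have l2: "length (drop (Suc j) ss) = Suc (n' - j)" using lk j by simp
      have "G (take (Suc j) ss) = fps_const (catalan j) * fps_X ^ j * D ^ j * ?P (take (Suc j) ss)"
        using less.IH[OF _ l1] Suc j by simp
      moreover have "G (drop (Suc j) ss) = fps_const (catalan (n' - j)) * fps_X ^ (n' - j) * D ^ (n' - j) * ?P (drop (Suc j) ss)"
        using less.IH[OF _ l2] Suc j by simp
      ultimately have "G (take (Suc j) ss) * G (drop (Suc j) ss) =
          fps_const (catalan j * catalan (n' - j)) * (fps_X ^ j * fps_X ^ (n' - j)) * (D ^ j * D ^ (n' - j))
           * (?P (take (Suc j) ss) * ?P (drop (Suc j) ss))"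
        by (simp add: algebra_simps)
      also have "\<dots> = fps_const (catalan j * catalan (n' - j)) * fps_X ^ n' * D ^ n' * ?P ss"
        using j by (simp only: power_add[symmetric] prod_take_drop) simp
      finally show "?h (Suc j) = fps_X * (fps_const (catalan j * catalan (n' - j)) * fps_X ^ n' * D ^ n' * ?P ss)"
        by simp
    qed simp
    also have "\<dots> = fps_X * (fps_const (\<Sum>j\<le>n'. catalan j * catalan (n' - j)) * fps_X ^ n' * D ^ n' * ?P ss)"
      by (simp add: fps_const_sum sum_distrib_left sum_distrib_right)
    also have "\<dots> = fps_const (catalan n) * fps_X ^ n * D ^ n' * ?P ss"
      using Suc by (simp add: catalan_conv algebra_simps)
    finally have "G ss = fps_const (catalan n) * fps_X ^ n * D ^ n' * ?P ss + 2 * fps_X * Bt * G ss"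
      by (simp add: algebra_simps)
    then have "G ss = D * (fps_const (catalan n) * fps_X ^ n * D ^ n' * ?P ss)" by (rule solveD)
    then show ?thesis using Suc by (simp add: algebra_simps)
  qed
qed




definition F5 :: "nat \<Rightarrow> nat \<Rightarrow> nat \<Rightarrow> nat \<Rightarrow> real \<Rightarrow> real fps" where
  "F5 a b c u K = D ^ a * fps_X ^ b * Bt ^ c * fps_const (2 ^ u * K)"

lemma F5_mult: "F5 (a + a') (b + b') (c + c') (u + u') (K * K') = F5 a b c u K * F5 a' b' c' u' K'"
proof -
  have r: "(2::real) ^ (u + u') * (K * K') = (2 ^ u * K) * (2 ^ u' * K')" by (simp add: power_add mult_ac)
  show ?thesis unfolding F5_def power_add r fps_const_mult[symmetric] by (simp only: mult_ac)
qed

lemma F5_cong: "a = a' \<Longrightarrow> b = b' \<Longrightarrow> c = c' \<Longrightarrow> u = u' \<Longrightarrow> K = K' \<Longrightarrow> F5 a b c u K = F5 a' b' c' u' K'"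
  by simp

lemma F5_one: "F5 0 0 0 0 1 = 1" unfolding F5_def by simp

lemma F5_prod: "F5 (\<Sum>i\<in>I. a i) (\<Sum>i\<in>I. b i) (\<Sum>i\<in>I. c i) (\<Sum>i\<in>I. u i) (\<Prod>i\<in>I. K i) = (\<Prod>i\<in>I. F5 (a i) (b i) (c i) (u i) (K i))"
proof (induction I rule: infinite_finite_induct)
  case (infinite I) then show ?case using F5_one by simp
next
  case empty then show ?case using F5_one by simp
next
  case (insert x F) then show ?case by (simp add: F5_mult)
qed

definition Kp :: "ptree \<Rightarrow> real" where "Kp S = (\<Prod>p\<in>verts S. catalan (outdeg S p - 1))"

lemma Kp_Node: "Kp (Node ss) = catalan (length ss - 1) * (\<Prod>i<length ss. Kp (ss ! i))"
  unfolding Kp_def by (rule prod_verts_Node)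

definition fS :: "ptree \<Rightarrow> real fps" where
  "fS S = F5 (nverts S + degdist S 0 - 1) (degdist S 0 + degdist S 1 - 1) (degdist S 0 + degdist S 1) (degdist S 1) (Kp S)"

lemma sum_minus_one: assumes "\<And>i. i < k \<Longrightarrow> x i \<ge> (1::nat)"
  shows "(\<Sum>i<k. x i - 1) + k = (\<Sum>i<k. x i)"
proof -
  have "(\<Sum>i<k. x i - 1 + 1) = (\<Sum>i<k. x i - 1) + (\<Sum>i<k. 1)" by (rule sum.distrib)
  moreover have "(\<Sum>i<k. (1::nat)) = k" by simp
  ultimately have "(\<Sum>i<k. x i - 1) + k = (\<Sum>i<k. x i - 1 + 1)" by linarith
  also have "\<dots> = (\<Sum>i<k. x i)"
  proof (rule sum.cong)
    fix i assume "i \<in> {..<k}"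
    then have "x i \<ge> 1" using assms by simp
    then show "x i - 1 + 1 = x i" by simp
  qed simp
  finally show ?thesis .
qed

lemma main: "G [S] = fS S"
proof (induction S)
  case (Node ss)
  let ?k = "length ss"
  let ?m = "\<lambda>i. nverts (ss ! i)" and ?l = "\<lambda>i. degdist (ss ! i) 0" and ?u = "\<lambda>i. degdist (ss ! i) 1"
  have IH: "G [ss ! i] = fS (ss ! i)" if "i < ?k" for i using Node.IH that by simp
  have mpos: "?m i \<ge> 1" for i by (rule nverts_pos)
  have lpos: "?l i \<ge> 1" for i by (rule leaves_pos)
  have GS: "G [Node ss] = D * Nn ss" using G_single_D Rr_Node by simp
  have M: "nverts (Node ss) = 1 + (\<Sum>i<?k. ?m i)" by (rule nverts_Node)
  have L: "degdist (Node ss) 0 = (if ?k = 0 then 1 else 0) + (\<Sum>i<?k. ?l i)" by (rule degdist_Node)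
  have U: "degdist (Node ss) 1 = (if ?k = 1 then 1 else 0) + (\<Sum>i<?k. ?u i)" by (rule degdist_Node)
  consider (z) "?k = 0" | (o) "?k = 1" | (t) "?k \<ge> 2" by linarith
  then show ?case
  proof cases
    case z
    then have ss: "ss = []" by simp
    have "G [Node ss] = D * Bt" using GS ss G_not1[of "[]"] by (simp add: G_Nil)
    moreover have "fS (Node ss) = F5 1 0 1 0 1" unfolding fS_def using M L U ss
      by (simp add: Kp_def verts_Node)
    ultimately show ?thesis unfolding F5_def by simp
  next
    case o
    then obtain S' where ss: "ss = [S']" by (metis One_nat_def Suc_length_conv length_0_conv)
    have "Nn [S'] = fps_X * (G [] * G [S']) + fps_X * (G [S'] * G [])" by (simp add: Nn_eq)
    then have "G [Node ss] = F5 1 1 1 1 1 * G [S']" using GS ss by (simp add: F5_def G_Nil algebra_simps numeral_fps_const)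
    also have "G [S'] = fS S'" using IH[of 0] ss by simp
    also have "F5 1 1 1 1 1 * fS S' = fS (Node ss)"
    proof -
      let ?m' = "nverts S'" and ?l' = "degdist S' 0" and ?u' = "degdist S' 1"
      have "?m' \<ge> 1" "?l' \<ge> 1" by (rule nverts_pos, rule leaves_pos)
      have e1: "nverts (Node ss) + degdist (Node ss) 0 - 1 = 1 + (?m' + ?l' - 1)"
        using M L ss \<open>?m' \<ge> 1\<close> by simp
      have e2: "degdist (Node ss) 0 + degdist (Node ss) 1 - 1 = 1 + (?l' + ?u' - 1)"
        using U L ss \<open>?l' \<ge> 1\<close> by simp
      have e3: "degdist (Node ss) 0 + degdist (Node ss) 1 = 1 + (?l' + ?u')"
        using U L ss by simp
      have e4: "degdist (Node ss) 1 = 1 + ?u'" using U ss by simp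
      have e5: "Kp (Node ss) = 1 * Kp S'" using Kp_Node[of ss] ss by simp
      have "fS (Node ss) = F5 (1 + (?m' + ?l' - 1)) (1 + (?l' + ?u' - 1)) (1 + (?l' + ?u')) (1 + ?u') (1 * Kp S')"
        unfolding fS_def by (rule F5_cong[OF e1 e2 e3 e4 e5])
      then show ?thesis unfolding F5_mult fS_def by simp
    qed
    finally show ?thesis .
  next
    case t
    define n where "n = ?k - 1"
    have kn: "?k = Suc n" "n \<ge> 1" using t unfolding n_def by auto
    have "G [Node ss] = D * G ss" using GS G_not1[of ss] t by simp
    also have "G ss = fps_const (catalan n) * fps_X ^ n * D ^ n * prod_list (map (\<lambda>S. G [S]) ss)"
      by (rule forest[OF kn(1)])
    also have "prod_list (map (\<lambda>S. G [S]) ss) = (\<Prod>i<?k. fS (ss ! i))"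
      unfolding prod_list_nth using IH by (intro prod.cong) auto
    also have "D * (fps_const (catalan n) * fps_X ^ n * D ^ n * (\<Prod>i<?k. fS (ss ! i))) =
        F5 (Suc n) n 0 0 (catalan n) * (\<Prod>i<?k. fS (ss ! i))"
      unfolding F5_def by (simp add: mult_ac)
    also have "(\<Prod>i<?k. fS (ss ! i)) = F5 (\<Sum>i<?k. ?m i + ?l i - 1) (\<Sum>i<?k. ?l i + ?u i - 1)
        (\<Sum>i<?k. ?l i + ?u i) (\<Sum>i<?k. ?u i) (\<Prod>i<?k. Kp (ss ! i))"
      unfolding fS_def by (rule F5_prod[symmetric])
    also have "F5 (Suc n) n 0 0 (catalan n) * \<dots> = F5 (Suc n + (\<Sum>i<?k. ?m i + ?l i - 1)) (n + (\<Sum>i<?k. ?l i + ?u i - 1))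
        (0 + (\<Sum>i<?k. ?l i + ?u i)) (0 + (\<Sum>i<?k. ?u i)) (catalan n * (\<Prod>i<?k. Kp (ss ! i)))"
      by (rule F5_mult[symmetric])
    also have "\<dots> = fS (Node ss)"
      unfolding fS_def
    proof (rule F5_cong)
      have s1: "(\<Sum>i<?k. ?m i + ?l i - 1) + ?k = (\<Sum>i<?k. ?m i + ?l i)"
        by (rule sum_minus_one, rule trans_le_add1, rule mpos)
      have s2: "(\<Sum>i<?k. ?l i + ?u i - 1) + ?k = (\<Sum>i<?k. ?l i + ?u i)"
        by (rule sum_minus_one, rule trans_le_add1, rule lpos)
      have d1: "(\<Sum>i<?k. ?m i + ?l i) = (\<Sum>i<?k. ?m i) + (\<Sum>i<?k. ?l i)" by (rule sum.distrib)
      have d2: "(\<Sum>i<?k. ?l i + ?u i) = (\<Sum>i<?k. ?l i) + (\<Sum>i<?k. ?u i)" by (rule sum.distrib)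
      have L': "degdist (Node ss) 0 = (\<Sum>i<?k. ?l i)" using L kn by simp
      have U': "degdist (Node ss) 1 = (\<Sum>i<?k. ?u i)" using U kn by simp
      show "Suc n + (\<Sum>i<?k. ?m i + ?l i - 1) = nverts (Node ss) + degdist (Node ss) 0 - 1"
        using s1 d1 M L' kn by simp
      show "n + (\<Sum>i<?k. ?l i + ?u i - 1) = degdist (Node ss) 0 + degdist (Node ss) 1 - 1"
        using s2 d2 L' U' kn by simp
      show "0 + (\<Sum>i<?k. ?l i + ?u i) = degdist (Node ss) 0 + degdist (Node ss) 1"
        using d2 L' U' by simp
      show "0 + (\<Sum>i<?k. ?u i) = degdist (Node ss) 1" using U' by simp
      show "catalan n * (\<Prod>i<?k. Kp (ss ! i)) = Kp (Node ss)" using Kp_Node[of ss] kn by simp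
    qed
    finally show ?thesis .
  qed
qed


theorem theorem1:
  fixes S :: ptree
  shows "A_fps S =
    (inverse (1 - 2 * fps_X * Bfps)) ^ (nverts S + degdist S 0 - 1)
    * fps_X ^ (degdist S 0 + degdist S 1 - 1)
    * Bfps ^ (degdist S 0 + degdist S 1)
    * fps_const (2 ^ degdist S 1 * (\<Prod>i\<in>{3..nverts S - 1}. catalan (i - 1) ^ degdist S i))"
proof -
  have "A_fps S = fS S" by (simp add: A_fps_G main)
  also have "\<dots> = D ^ (nverts S + degdist S 0 - 1) * fps_X ^ (degdist S 0 + degdist S 1 - 1)
    * Bt ^ (degdist S 0 + degdist S 1) * fps_const (2 ^ degdist S 1 * Kp S)"
    unfolding fS_def F5_def ..
  also have "Kp S = (\<Prod>i\<in>{3..nverts S - 1}. catalan (i - 1) ^ degdist S i)"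
    unfolding Kp_def by (rule K_eq[symmetric])
  finally show ?thesis unfolding D_def Bt_Bfps .
qed

end
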